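(* Let $\nu$ be a Lévy measure on $\mathbb{R}$ with $\int_{|y|>1}|y|\,\nu(dy)<\infty$ and with a density $\rho$ satisfying $\rho(y)\le M/|y|^{1+\alpha}$ for $|y|\le1$, for some $M>0$ and $\alpha\in[1,2)$. For $\phi$ define $$I\phi(x,t)=\int_{\mathbb{R}}\big[\phi(x+y,t)-\phi(x,t)-y\,\partial_x\phi(x,t)\mathbf{1}_{\{|y|\le1\}}\big]\nu(dy).$$ Let $D=(\ell,r)$ be a bounded open interval, $D^1=(\ell-1,r+1)$, $s>0$, $D_s=D\times(0,s)$, $D^1_s=D^1\times(0,s)$, $E_s=\mathbb{R}\times[0,s]$. (i) Suppose $|\phi(x_1,t_1)-\phi(x_2,t_2)|\le L(|x_1-x_2|+|t_1-t_2|^{1/2})$ for some $L>0$ and all $(x_1,t_1),(x_2,t_2)\in E_s$, and moreover $\phi\in H^{\beta,\beta/2}(\overline{D^1_s})$ for some $\beta\in(\alpha,2)$. Then $I\phi\in H^{\frac{\beta-\alpha}{2},\frac{\beta-\alpha}{4}}(\overline{D_s})$ and $$\|I\phi\|^{(\frac{\beta-\alpha}{2})}_{\overline{D_s}}\le C\big(L+\|\phi\|^{(\beta)}_{\overline{D^1_s}}\big)$$ for a positive constant $C$ depending on $D,\alpha,\beta$. (ii) If $\phi\in H^{\beta,\beta/2}(E_s)$ for some $\beta\in(\alpha,2)$, then $I\phi\in H^{\frac{\beta-\alpha}{2},\frac{\beta-\alpha}{4}}(E_s)$ and $\|I\phi\|^{(\frac{\beta-\alpha}{2})}_{E_s}\le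 C\|\phi\|^{(\beta)}_{E_s}$ for a positive constant $C$ depending on $\alpha$ and $\beta$.
   Context: For a positive non-integer $\beta$ and a closed set $Q\subset\mathbb{R}\times[0,\infty)$, $H^{\beta,\beta/2}(Q)$ is the space of functions $v$ continuous on $Q$ whose classical derivatives $\partial_t^{i}\partial_x^{j}v$ with $2i+j<\beta$ exist and are continuous, with finite norm $\|v\|^{(\beta)}_Q=\sum_{2i+j\le[\beta]}\sup_Q|\partial_t^i\partial_x^jv|+\sum_{2i+j=[\beta]}\sup_{|x-x'|\le\rho_0}\frac{|\partial_t^i\partial_x^jv(x,t)-\partial_t^i\partial_x^jv(x',t)|}{|x-x'|^{\beta-[\beta]}}+\sum_{\beta-2<2i+j<\beta}\sup_{|t-t'|\le\rho_0}\frac{|\partial_t^i\partial_x^jv(x,t)-\partial_t^i\partial_x^jv(x,t')|}{|t-t'|^{(\beta-2i-j)/2}}$ (points in $Q$), for a fixed constant $\rho_0>0$. In particular for $\beta\in(1,2)$ the norm consists of $\sup|v|+\sup|\partial_xv|$, the $x$-Hölder seminorm of order $\beta-1$ of $\partial_xv$, the $t$-Hölder seminorm of order $\beta/2$ of $v$ and the $t$-Hölder seminorm of order $(\beta-1)/2$ of $\partial_xv$. *)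

theory Defs
  imports "HOL-Analysis.Analysis"
begin

definition levy_measure :: "real measure \<Rightarrow> bool" where
  "levy_measure \<nu> \<longleftrightarrow> sets \<nu> = sets borel \<and> emeasure \<nu> {0} = 0 \<and>
     (\<integral>\<^sup>+ y. ennreal (min 1 (y\<^sup>2)) \<partial>\<nu>) < \<infinity>"

definition xslice :: "(real \<times> real) set \<Rightarrow> real \<Rightarrow> real set" where
  "xslice Q t = {z. (z, t) \<in> Q}"

definition dx :: "(real \<times> real) set \<Rightarrow> (real \<times> real \<Rightarrow> real) \<Rightarrow> real \<times> real \<Rightarrow> real" where
  "dx Q v p = vector_derivative (\<lambda>z. v (z, snd p)) (at (fst p) within xslice Q (snd p))"

definition sup_set :: "(real \<times> real) set \<Rightarrow> (real \<times> real \<Rightarrow> real) \<Rightarrow> real set" where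
  "sup_set Q w = {\<bar>w p\<bar> | p. p \<in> Q}"

definition holx_set :: "real \<Rightarrow> (real \<times> real) set \<Rightarrow> (real \<times> real \<Rightarrow> real) \<Rightarrow> real \<Rightarrow> real set" where
  "holx_set \<rho>0 Q w \<gamma> = {\<bar>w p - w q\<bar> / \<bar>fst p - fst q\<bar> powr \<gamma> | p q.
      p \<in> Q \<and> q \<in> Q \<and> snd p = snd q \<and> \<bar>fst p - fst q\<bar> \<le> \<rho>0}"

definition holt_set :: "real \<Rightarrow> (real \<times> real) set \<Rightarrow> (real \<times> real \<Rightarrow> real) \<Rightarrow> real \<Rightarrow> real set" where
  "holt_set \<rho>0 Q w \<gamma> = {\<bar>w p - w q\<bar> / \<bar>snd p - snd q\<bar> powr \<gamma> | p q.
      p \<in> Q \<and> q \<in> Q \<and> fst p = fst q \<and> \<bar>snd p - snd q\<bar> \<le> \<rho>0}"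

text \<open>The parabolic Hoelder space H^{beta,beta/2}(Q), for non-integer beta in (0,2)
  (the only range needed here); for other beta it is left empty.\<close>
definition Hspace :: "real \<Rightarrow> real \<Rightarrow> (real \<times> real) set \<Rightarrow> (real \<times> real \<Rightarrow> real) \<Rightarrow> bool" where
  "Hspace \<rho>0 \<beta> Q v \<longleftrightarrow> continuous_on Q v \<and>
     (if 0 < \<beta> \<and> \<beta> < 1 then
        bdd_above (sup_set Q v) \<and> bdd_above (holx_set \<rho>0 Q v \<beta>) \<and> bdd_above (holt_set \<rho>0 Q v (\<beta>/2))
      else if 1 < \<beta> \<and> \<beta> < 2 then
        (\<forall>p\<in>Q. (\<lambda>z. v (z, snd p)) differentiable (at (fst p) within xslice Q (snd p))) \<and>
        continuous_on Q (dx Q v) \<and>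
        bdd_above (sup_set Q v) \<and> bdd_above (sup_set Q (dx Q v)) \<and>
        bdd_above (holx_set \<rho>0 Q (dx Q v) (\<beta> - 1)) \<and>
        bdd_above (holt_set \<rho>0 Q v (\<beta>/2)) \<and> bdd_above (holt_set \<rho>0 Q (dx Q v) ((\<beta> - 1)/2))
      else False)"

definition Hnorm :: "real \<Rightarrow> real \<Rightarrow> (real \<times> real) set \<Rightarrow> (real \<times> real \<Rightarrow> real) \<Rightarrow> real" where
  "Hnorm \<rho>0 \<beta> Q v =
     (if 0 < \<beta> \<and> \<beta> < 1 then
        Sup (sup_set Q v) + Sup (holx_set \<rho>0 Q v \<beta>) + Sup (holt_set \<rho>0 Q v (\<beta>/2))
      else
        Sup (sup_set Q v) + Sup (sup_set Q (dx Q v)) + Sup (holx_set \<rho>0 Q (dx Q v) (\<beta> - 1))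
        + Sup (holt_set \<rho>0 Q v (\<beta>/2)) + Sup (holt_set \<rho>0 Q (dx Q v) ((\<beta> - 1)/2)))"

definition levy_integrand :: "(real \<times> real \<Rightarrow> real) \<Rightarrow> real \<times> real \<Rightarrow> real \<Rightarrow> real" where
  "levy_integrand \<phi> p y =
     \<phi> (fst p + y, snd p) - \<phi> p - y * deriv (\<lambda>z. \<phi> (z, snd p)) (fst p) * indicator {y. \<bar>y\<bar> \<le> 1} y"

definition Iop :: "real measure \<Rightarrow> (real \<times> real \<Rightarrow> real) \<Rightarrow> real \<times> real \<Rightarrow> real" where
  "Iop \<nu> \<phi> p = (\<integral> y. levy_integrand \<phi> p y \<partial>\<nu>)"

end

theory Submission
  imports Defs
begin



lemma powr_abs_has_integral:
  fixes a :: real assumes a: "a > -1"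
  shows "((\<lambda>y. indicator {-1..1} y * \<bar>y\<bar> powr a) has_integral (2/(a+1))) UNIV"
proof -
  have h1: "((\<lambda>x. x powr a) has_integral (1/(a+1))) {0..1}"
    using has_integral_powr_from_0[OF a, of 1] by simp
  have h1': "((\<lambda>x. \<bar>x\<bar> powr a) has_integral (1/(a+1))) {0..1}"
    by (rule has_integral_spike_finite[OF _ _ h1, of "{}"]) auto
  have h2: "((\<lambda>x. (-x) powr a) has_integral (1/(a+1))) {-1..0}"
  proof -
    have "((\<lambda>x. (\<lambda>x. x powr a) (-x)) has_integral (1/(a+1))) {-1..-0}"
      using has_integral_reflect_real[of "\<lambda>x. x powr a", THEN iffD2, OF h1] by simp
    then show ?thesis by simp
  qed
  have h2': "((\<lambda>x. \<bar>x\<bar> powr a) has_integral (1/(a+1))) {-1..0}"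
    by (rule has_integral_spike_finite[OF _ _ h2, of "{}"]) auto
  have "((\<lambda>x. \<bar>x\<bar> powr a) has_integral (1/(a+1) + 1/(a+1))) {-1..1}"
    using has_integral_combine[OF _ _ h2' h1'] by simp
  then have "((\<lambda>x. \<bar>x\<bar> powr a) has_integral (2/(a+1))) {-1..1}" by simp
  then have "((\<lambda>x. if x \<in> {-1..1} then \<bar>x\<bar> powr a else 0) has_integral (2/(a+1))) UNIV"
    by (subst has_integral_restrict_UNIV)
  moreover have "(\<lambda>x. if x \<in> {-1..1} then \<bar>x\<bar> powr a else 0) = (\<lambda>y. indicator {-1..1} y * \<bar>y\<bar> powr a)"
    by (auto simp: indicator_def)
  ultimately show ?thesis by simp
qed

lemma W_integrable:
  fixes \<nu> :: "real measure" and \<rho> :: "real \<Rightarrow> real"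
  assumes rho_meas: "\<rho> \<in> borel_measurable borel" and nn: "\<forall>y. 0 \<le> \<rho> y"
    and nu: "\<nu> = density lborel (\<lambda>y. ennreal (\<rho> y))"
    and far: "(\<integral>\<^sup>+ y. ennreal (\<bar>y\<bar> * indicator {y. \<bar>y\<bar> > 1} y) \<partial>\<nu>) < \<infinity>"
    and M: "M > 0" and bnd: "\<forall>y. y \<noteq> 0 \<and> \<bar>y\<bar> \<le> 1 \<longrightarrow> \<rho> y \<le> M / \<bar>y\<bar> powr (1 + \<alpha>)"
    and e: "\<alpha> < e"
  shows "integrable \<nu> (\<lambda>y. if \<bar>y\<bar> \<le> 1 then \<bar>y\<bar> powr e else \<bar>y\<bar>)"
proof (rule integrableI_bounded)
  define W where "W = (\<lambda>y::real. if \<bar>y\<bar> \<le> 1 then \<bar>y\<bar> powr e else \<bar>y\<bar>)"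
  have Wm: "W \<in> borel_measurable borel" unfolding W_def by measurable
  show "(\<lambda>y. if \<bar>y\<bar> \<le> 1 then \<bar>y\<bar> powr e else \<bar>y\<bar>) \<in> borel_measurable \<nu>"
    using Wm unfolding W_def nu by simp
  define a where "a = e - 1 - \<alpha>"
  have a: "a > -1" using e unfolding a_def by simp
  have g1m: "(\<lambda>y::real. indicator {-1..1} y * \<bar>y\<bar> powr e) \<in> borel_measurable borel" by measurable
  have "(\<integral>\<^sup>+ y. ennreal (indicator {-1..1} y * \<bar>y\<bar> powr e) \<partial>\<nu>)
      = (\<integral>\<^sup>+ y. ennreal (\<rho> y) * ennreal (indicator {-1..1} y * \<bar>y\<bar> powr e) \<partial>lborel)"
    unfolding nu using g1m rho_meas by (subst nn_integral_density) auto
  also have "\<dots> \<le> (\<integral>\<^sup>+ y. ennreal M * ennreal (indicator {-1..1} y * \<bar>y\<bar> powr a) \<partial>lborel)"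
  proof (rule nn_integral_mono)
    fix y :: real
    show "ennreal (\<rho> y) * ennreal (indicator {-1..1} y * \<bar>y\<bar> powr e) \<le> ennreal M * ennreal (indicator {-1..1} y * \<bar>y\<bar> powr a)"
    proof (cases "y \<noteq> 0 \<and> \<bar>y\<bar> \<le> 1")
      case True
      then have yp: "\<bar>y\<bar> > 0" by simp
      have "\<rho> y * \<bar>y\<bar> powr e \<le> M / \<bar>y\<bar> powr (1 + \<alpha>) * \<bar>y\<bar> powr e"
        using bnd True by (intro mult_right_mono) auto
      also have "\<dots> = M * \<bar>y\<bar> powr a"
        unfolding a_def using yp by (simp add: powr_diff field_simps powr_add)
      finally have "\<rho> y * \<bar>y\<bar> powr e \<le> M * \<bar>y\<bar> powr a" .
      then show ?thesis using True nn M
        by (simp add: indicator_def ennreal_mult[symmetric] ennreal_leI)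
    next
      case False
      then show ?thesis by (auto simp: indicator_def)
    qed
  qed
  also have "\<dots> = ennreal M * (\<integral>\<^sup>+ y. ennreal (indicator {-1..1} y * \<bar>y\<bar> powr a) \<partial>lborel)"
    by (rule nn_integral_cmult) measurable
  also have "(\<integral>\<^sup>+ y. ennreal (indicator {-1..1} y * \<bar>y\<bar> powr a) \<partial>lborel) = ennreal (2/(a+1))"
  proof -
    have gam: "(\<lambda>y::real. indicator {-1..1} y * \<bar>y\<bar> powr a) \<in> borel_measurable borel" by measurable
    show ?thesis
      by (rule nn_integral_has_integral_lborel[OF gam _ powr_abs_has_integral[OF a]]) (simp add: indicator_def)
  qed
  finally have A: "(\<integral>\<^sup>+ y. ennreal (indicator {-1..1} y * \<bar>y\<bar> powr e) \<partial>\<nu>) < \<infinity>"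
    using ennreal_mult_less_top[of "ennreal M" "ennreal (2/(a+1))"] by (simp add: order_le_less_trans)
  have "(\<integral>\<^sup>+ y. ennreal (norm (W y)) \<partial>\<nu>) =
     (\<integral>\<^sup>+ y. ennreal (indicator {-1..1} y * \<bar>y\<bar> powr e) + ennreal (\<bar>y\<bar> * indicator {y. \<bar>y\<bar> > 1} y) \<partial>\<nu>)"
    by (rule nn_integral_cong) (auto simp: W_def indicator_def)
  also have "\<dots> = (\<integral>\<^sup>+ y. ennreal (indicator {-1..1} y * \<bar>y\<bar> powr e) \<partial>\<nu>) + (\<integral>\<^sup>+ y. ennreal (\<bar>y\<bar> * indicator {y. \<bar>y\<bar> > 1} y) \<partial>\<nu>)"
    by (rule nn_integral_add) (auto simp: nu)
  also have "\<dots> < \<infinity>" using A far by simp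
  finally show "(\<integral>\<^sup>+ y. ennreal (norm (if \<bar>y\<bar> \<le> 1 then \<bar>y\<bar> powr e else \<bar>y\<bar>)) \<partial>\<nu>) < \<infinity>"
    unfolding W_def .
qed



lemma taylor_mvt:
  fixes k k' :: "real \<Rightarrow> real"
  assumes D: "\<And>w. w \<in> {min 0 y..max 0 y} \<Longrightarrow> (k has_field_derivative k' w) (at w within {min 0 y..max 0 y})"
  shows "\<exists>\<xi> \<in> {min 0 y..max 0 y}. k y - k 0 - y * k' 0 = y * (k' \<xi> - k' 0)"
proof -
  have "\<exists>\<xi>\<in>{min 0 y..max 0 y}. k (max 0 y) - k (min 0 y) = (*) (k' \<xi>) (max 0 y - min 0 y)"
    by (rule mvt_very_simple) (use D in \<open>auto simp: has_field_derivative_def\<close>)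
  then obtain \<xi> where \<xi>: "\<xi> \<in> {min 0 y..max 0 y}" "k (max 0 y) - k (min 0 y) = k' \<xi> * (max 0 y - min 0 y)"
    by auto
  have "k y - k 0 = y * k' \<xi>"
  proof (cases "y \<ge> 0")
    case True then show ?thesis using \<xi> by (simp add: max_def min_def)
  next
    case False then show ?thesis using \<xi> by (simp add: max_def min_def algebra_simps)
  qed
  then show ?thesis using \<xi>(1) by (intro bexI[of _ \<xi>]) (auto simp: algebra_simps)
qed

lemma combine_bound:
  fixes G A y h e \<gamma> \<beta> :: real
  assumes G1: "\<bar>G\<bar> \<le> A * \<bar>y\<bar> powr \<beta>" and G2: "\<bar>G\<bar> \<le> A * \<bar>y\<bar> * h powr (\<beta> - 1)"
    and A: "A \<ge> 0" and h: "h \<ge> 0" and e: "1 \<le> e" and \<beta>: "\<beta> = e + \<gamma>" and \<gamma>: "\<gamma> \<ge> 0"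
  shows "\<bar>G\<bar> \<le> A * \<bar>y\<bar> powr e * h powr \<gamma>"
proof (cases "\<bar>y\<bar> \<le> h")
  case True
  have "\<bar>y\<bar> powr \<beta> = \<bar>y\<bar> powr e * \<bar>y\<bar> powr \<gamma>" using \<beta> by (simp add: powr_add)
  also have "\<dots> \<le> \<bar>y\<bar> powr e * h powr \<gamma>"
    by (intro mult_left_mono powr_mono2) (use True \<gamma> in auto)
  finally show ?thesis using G1 A by (smt (verit) mult_left_mono mult.assoc)
next
  case False
  then have yp: "\<bar>y\<bar> > 0" using h by simp
  have "\<bar>y\<bar> * h powr (\<beta> - 1) = \<bar>y\<bar> * h powr (e - 1) * h powr \<gamma>"
    using \<beta> by (simp add: powr_add[symmetric] algebra_simps)
  also have "\<dots> \<le> \<bar>y\<bar> * \<bar>y\<bar> powr (e - 1) * h powr \<gamma>"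
    by (intro mult_right_mono mult_left_mono powr_mono2) (use False e h in auto)
  also have "\<bar>y\<bar> * \<bar>y\<bar> powr (e - 1) = \<bar>y\<bar> powr e"
    using yp by (simp add: powr_add[symmetric] powr_diff)
  finally have "\<bar>y\<bar> * h powr (\<beta> - 1) \<le> \<bar>y\<bar> powr e * h powr \<gamma>" .
  then show ?thesis using G2 A by (smt (verit) mult_left_mono mult.assoc)
qed

lemma holx_bound:
  fixes w :: "real \<times> real \<Rightarrow> real"
  assumes bh: "bdd_above (holx_set \<rho>0 Q w \<gamma>)" and bs: "bdd_above (sup_set Q w)"
    and p: "(a, t) \<in> Q" and q: "(b, t) \<in> Q" and r: "\<rho>0 > 0" and g: "\<gamma> > 0"
  shows "\<bar>w (a, t) - w (b, t)\<bar> \<le> (Sup (holx_set \<rho>0 Q w \<gamma>) + 2 * Sup (sup_set Q w) / \<rho>0 powr \<gamma>) * \<bar>a - b\<bar> powr \<gamma>"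
proof -
  define Hh where "Hh = Sup (holx_set \<rho>0 Q w \<gamma>)"
  define S where "S = Sup (sup_set Q w)"
  have Sa: "\<bar>w (a,t)\<bar> \<le> S" unfolding S_def
    by (rule cSup_upper[OF _ bs]) (use p in \<open>auto simp: sup_set_def\<close>)
  have Sb: "\<bar>w (b,t)\<bar> \<le> S" unfolding S_def
    by (rule cSup_upper[OF _ bs]) (use q in \<open>auto simp: sup_set_def\<close>)
  have "0 \<in> holx_set \<rho>0 Q w \<gamma>"
    apply (simp add: holx_set_def) using p r by force
  then have H0: "0 \<le> Hh" unfolding Hh_def by (rule cSup_upper[OF _ bh])
  have S0: "0 \<le> S" using Sa by simp
  show ?thesis
  proof (cases "a = b")
    case True then show ?thesis by simp
  next
    case False
    then have dp: "\<bar>a - b\<bar> > 0" by simp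
    then have dgp: "\<bar>a - b\<bar> powr \<gamma> > 0" by simp
    have aux: "0 \<le> 2 * S / \<rho>0 powr \<gamma> * \<bar>a - b\<bar> powr \<gamma>" using S0 r by simp
    show ?thesis
    proof (cases "\<bar>a - b\<bar> \<le> \<rho>0")
      case True
      have "\<bar>w (a,t) - w (b,t)\<bar> / \<bar>a - b\<bar> powr \<gamma> \<in> holx_set \<rho>0 Q w \<gamma>"
        unfolding holx_set_def using p q True
        by (auto intro!: exI[of _ "(a,t)"] exI[of _ "(b,t)"])
      then have "\<bar>w (a,t) - w (b,t)\<bar> / \<bar>a - b\<bar> powr \<gamma> \<le> Hh" unfolding Hh_def by (rule cSup_upper[OF _ bh])
      then have "\<bar>w (a,t) - w (b,t)\<bar> \<le> Hh * \<bar>a - b\<bar> powr \<gamma>" using dgp by (simp add: divide_le_eq)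
      then show ?thesis using aux unfolding Hh_def[symmetric] S_def[symmetric] by (simp add: algebra_simps)
    next
      case False
      have "\<rho>0 powr \<gamma> \<le> \<bar>a - b\<bar> powr \<gamma>" using False r g by (intro powr_mono2) auto
      then have "2 * S \<le> 2 * S / \<rho>0 powr \<gamma> * \<bar>a - b\<bar> powr \<gamma>" using S0 r
        by (simp add: field_simps mult_left_mono)
      moreover have "0 \<le> Hh * \<bar>a - b\<bar> powr \<gamma>" using H0 by simp
      ultimately show ?thesis using Sa Sb unfolding Hh_def[symmetric] S_def[symmetric] by (simp add: algebra_simps)
    qed
  qed
qed

lemma holt_bound:
  fixes w :: "real \<times> real \<Rightarrow> real"
  assumes bh: "bdd_above (holt_set \<rho>0 Q w \<gamma>)" and bs: "bdd_above (sup_set Q w)"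
    and p: "(x, a) \<in> Q" and q: "(x, b) \<in> Q" and r: "\<rho>0 > 0" and g: "\<gamma> > 0"
  shows "\<bar>w (x, a) - w (x, b)\<bar> \<le> (Sup (holt_set \<rho>0 Q w \<gamma>) + 2 * Sup (sup_set Q w) / \<rho>0 powr \<gamma>) * \<bar>a - b\<bar> powr \<gamma>"
proof -
  define Hh where "Hh = Sup (holt_set \<rho>0 Q w \<gamma>)"
  define S where "S = Sup (sup_set Q w)"
  have Sa: "\<bar>w (x,a)\<bar> \<le> S" unfolding S_def
    by (rule cSup_upper[OF _ bs]) (use p in \<open>auto simp: sup_set_def\<close>)
  have Sb: "\<bar>w (x,b)\<bar> \<le> S" unfolding S_def
    by (rule cSup_upper[OF _ bs]) (use q in \<open>auto simp: sup_set_def\<close>)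
  have "0 \<in> holt_set \<rho>0 Q w \<gamma>"
    apply (simp add: holt_set_def) using p r by force
  then have H0: "0 \<le> Hh" unfolding Hh_def by (rule cSup_upper[OF _ bh])
  have S0: "0 \<le> S" using Sa by simp
  show ?thesis
  proof (cases "a = b")
    case True then show ?thesis by simp
  next
    case False
    then have dp: "\<bar>a - b\<bar> > 0" by simp
    then have dgp: "\<bar>a - b\<bar> powr \<gamma> > 0" by simp
    have aux: "0 \<le> 2 * S / \<rho>0 powr \<gamma> * \<bar>a - b\<bar> powr \<gamma>" using S0 r by simp
    show ?thesis
    proof (cases "\<bar>a - b\<bar> \<le> \<rho>0")
      case True
      have "\<bar>w (x,a) - w (x,b)\<bar> / \<bar>a - b\<bar> powr \<gamma> \<in> holt_set \<rho>0 Q w \<gamma>"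
        unfolding holt_set_def using p q True
        by (auto intro!: exI[of _ "(x,a)"] exI[of _ "(x,b)"])
      then have "\<bar>w (x,a) - w (x,b)\<bar> / \<bar>a - b\<bar> powr \<gamma> \<le> Hh" unfolding Hh_def by (rule cSup_upper[OF _ bh])
      then have "\<bar>w (x,a) - w (x,b)\<bar> \<le> Hh * \<bar>a - b\<bar> powr \<gamma>" using dgp by (simp add: divide_le_eq)
      then show ?thesis using aux unfolding Hh_def[symmetric] S_def[symmetric] by (simp add: algebra_simps)
    next
      case False
      have "\<rho>0 powr \<gamma> \<le> \<bar>a - b\<bar> powr \<gamma>" using False r g by (intro powr_mono2) auto
      then have "2 * S \<le> 2 * S / \<rho>0 powr \<gamma> * \<bar>a - b\<bar> powr \<gamma>" using S0 r
        by (simp add: field_simps mult_left_mono)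
      moreover have "0 \<le> Hh * \<bar>a - b\<bar> powr \<gamma>" using H0 by simp
      ultimately show ?thesis using Sa Sb unfolding Hh_def[symmetric] S_def[symmetric] by (simp add: algebra_simps)
    qed
  qed
qed



lemma shift_deriv:
  fixes f f' :: "real \<Rightarrow> real"
  assumes D: "\<And>z. z \<in> I \<Longrightarrow> (f has_field_derivative f' z) (at z within I)"
    and S: "(\<lambda>w. x + w) ` S \<subseteq> I" and w: "w \<in> S"
  shows "((\<lambda>w. f (x + w)) has_field_derivative f' (x + w)) (at w within S)"
proof -
  have "(f has_field_derivative f' (x + w)) (at (x + w) within ((\<lambda>w. x + w) ` S))"
    by (rule DERIV_subset[OF D S]) (use S w in auto)
  moreover have "((\<lambda>w. x + w) has_field_derivative 1) (at w within S)"
    by (auto intro!: derivative_eq_intros)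
  ultimately have "(f \<circ> (\<lambda>w. x + w) has_field_derivative f' (x + w) * 1) (at w within S)"
    by (rule DERIV_image_chain)
  then show ?thesis by (simp add: o_def)
qed

lemma int_diff_bound:
  fixes f g W :: "real \<Rightarrow> real"
  assumes f: "integrable \<nu> f" and g: "integrable \<nu> g" and W: "integrable \<nu> W"
    and b: "\<And>y. \<bar>f y - g y\<bar> \<le> K * W y"
  shows "\<bar>(\<integral>y. f y \<partial>\<nu>) - (\<integral>y. g y \<partial>\<nu>)\<bar> \<le> K * (\<integral>y. W y \<partial>\<nu>)"
proof -
  have "(\<integral>y. f y \<partial>\<nu>) - (\<integral>y. g y \<partial>\<nu>) = (\<integral>y. f y - g y \<partial>\<nu>)"
    using f g by (simp add: integral_diff)
  also have "norm \<dots> \<le> (\<integral>y. K * W y \<partial>\<nu>)"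
    by (rule Bochner_Integration.integral_norm_bound_integral) (use f g W b in auto)
  also have "\<dots> = K * (\<integral>y. W y \<partial>\<nu>)" by simp
  finally show ?thesis by simp
qed

lemma int_bound:
  fixes f W :: "real \<Rightarrow> real"
  assumes f: "integrable \<nu> f" and W: "integrable \<nu> W"
    and b: "\<And>y. \<bar>f y\<bar> \<le> K * W y"
  shows "\<bar>(\<integral>y. f y \<partial>\<nu>)\<bar> \<le> K * (\<integral>y. W y \<partial>\<nu>)"
  using int_diff_bound[OF f integrable_zero W, of K] b by simp

lemma quot_bound:
  fixes a d K B g :: real
  assumes "0 \<le> a" "0 \<le> d" "d \<le> 1 \<Longrightarrow> a \<le> K * d powr g" "a \<le> B" "0 \<le> K" "0 \<le> B" "0 < g"
  shows "a / d powr g \<le> K + B"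
proof (cases "d = 0")
  case True then show ?thesis using assms by simp
next
  case False
  then have dp: "d > 0" using assms by simp
  show ?thesis
  proof (cases "d \<le> 1")
    case True
    then have "a / d powr g \<le> K" using assms dp by (simp add: divide_le_eq)
    then show ?thesis using assms by simp
  next
    case False
    then have "1 \<le> d powr g" using assms
      by (metis ge_one_powr_ge_zero less_imp_le linorder_not_le)
    then have "a / d powr g \<le> a" using assms by (simp add: divide_le_eq mult_le_cancel_left1)
    then show ?thesis using assms by simp
  qed
qed

lemma cont_hoelder:
  fixes f :: "real \<times> real \<Rightarrow> real"
  assumes b: "\<And>p q. p \<in> S \<Longrightarrow> q \<in> S \<Longrightarrow> dist p q \<le> 1 \<Longrightarrow>
       \<bar>f p - f q\<bar> \<le> K * (\<bar>fst p - fst q\<bar> powr a + \<bar>snd p - snd q\<bar> powr b)"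
    and K: "0 \<le> K" and a: "0 < a" and bb: "0 < b"
  shows "continuous_on S f"
  unfolding continuous_on_iff
proof (intro ballI allI impI)
  fix p e assume p: "p \<in> S" and e: "(0::real) < e"
  define c where "c = e / (2 * (K + 1))"
  have c: "c > 0" using e K unfolding c_def by simp
  define d where "d = min 1 (min (c powr (1/a)) (c powr (1/b)))"
  have d: "d > 0" using c unfolding d_def by simp
  show "\<exists>d>0. \<forall>x'\<in>S. dist x' p < d \<longrightarrow> dist (f x') (f p) < e"
  proof (intro exI[of _ d] conjI ballI impI d)
    fix q assume q: "q \<in> S" and dq: "dist q p < d"
    have d1: "\<bar>fst q - fst p\<bar> < c powr (1/a)"
      using dist_fst_le[of q p] dq unfolding d_def dist_real_def by simp
    have d2: "\<bar>snd q - snd p\<bar> < c powr (1/b)"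
      using dist_snd_le[of q p] dq unfolding d_def dist_real_def by simp
    have "\<bar>fst q - fst p\<bar> powr a < (c powr (1/a)) powr a"
      by (rule powr_less_mono2) (use a d1 in auto)
    also have "\<dots> = c" using a c by (simp add: powr_powr)
    finally have e1: "\<bar>fst q - fst p\<bar> powr a < c" .
    have "\<bar>snd q - snd p\<bar> powr b < (c powr (1/b)) powr b"
      by (rule powr_less_mono2) (use bb d2 in auto)
    also have "\<dots> = c" using bb c by (simp add: powr_powr)
    finally have e2: "\<bar>snd q - snd p\<bar> powr b < c" .
    have "\<bar>f q - f p\<bar> \<le> K * (\<bar>fst q - fst p\<bar> powr a + \<bar>snd q - snd p\<bar> powr b)"
      by (rule b[OF q p]) (use dq d_def in auto)
    also have "\<dots> \<le> K * (2 * c)" using e1 e2 K by (intro mult_left_mono) auto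
    also have "\<dots> < e" using e K unfolding c_def by (simp add: field_simps)
    finally show "dist (f q) (f p) < e" by (simp add: dist_real_def)
  qed
qed



lemma abs_powr_split: "(\<beta>::real) > 1 \<Longrightarrow> \<bar>y\<bar> * \<bar>y\<bar> powr (\<beta> - 1) = \<bar>y::real\<bar> powr \<beta>"
proof -
  have "\<bar>y\<bar> powr \<beta> = \<bar>y\<bar> powr (1 + (\<beta> - 1))" by simp
  also have "\<dots> = \<bar>y\<bar> powr 1 * \<bar>y\<bar> powr (\<beta> - 1)" by (rule powr_add)
  also have "\<bar>y\<bar> powr 1 = \<bar>y\<bar>" by simp
  finally show ?thesis by simp
qed

lemma near_bounds:
  fixes k k' :: "real \<Rightarrow> real"
  assumes D: "\<And>w. w \<in> {min 0 y..max 0 y} \<Longrightarrow> (k has_field_derivative k' w) (at w within {min 0 y..max 0 y})"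
    and H1: "\<And>w. w \<in> {min 0 y..max 0 y} \<Longrightarrow> \<bar>k' w - k' 0\<bar> \<le> A * \<bar>w\<bar> powr (\<beta> - 1)"
    and H2: "\<And>w. w \<in> {min 0 y..max 0 y} \<Longrightarrow> \<bar>k' w - k' 0\<bar> \<le> B"
    and A: "A \<ge> 0" and \<beta>: "\<beta> > 1"
  shows "\<bar>k y - k 0 - y * k' 0\<bar> \<le> A * \<bar>y\<bar> powr \<beta> \<and> \<bar>k y - k 0 - y * k' 0\<bar> \<le> \<bar>y\<bar> * B"
proof -
  obtain \<xi> where \<xi>: "\<xi> \<in> {min 0 y..max 0 y}" and eq: "k y - k 0 - y * k' 0 = y * (k' \<xi> - k' 0)"
    using taylor_mvt[OF D] by blast
  have xy: "\<bar>\<xi>\<bar> \<le> \<bar>y\<bar>" using \<xi> by (auto simp: min_def max_def split: if_splits)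
  have "\<bar>k' \<xi> - k' 0\<bar> \<le> A * \<bar>\<xi>\<bar> powr (\<beta> - 1)" using H1[OF \<xi>] .
  also have "\<dots> \<le> A * \<bar>y\<bar> powr (\<beta> - 1)"
    by (intro mult_left_mono powr_mono2) (use xy A \<beta> in auto)
  finally have "\<bar>y\<bar> * \<bar>k' \<xi> - k' 0\<bar> \<le> \<bar>y\<bar> * (A * \<bar>y\<bar> powr (\<beta> - 1))"
    by (intro mult_left_mono) auto
  also have "\<dots> = A * \<bar>y\<bar> powr \<beta>" using abs_powr_split[OF \<beta>, of y] by (simp add: algebra_simps)
  finally have 1: "\<bar>k y - k 0 - y * k' 0\<bar> \<le> A * \<bar>y\<bar> powr \<beta>" unfolding eq by (simp add: abs_mult)
  have "\<bar>y\<bar> * \<bar>k' \<xi> - k' 0\<bar> \<le> \<bar>y\<bar> * B" using H2[OF \<xi>] by (intro mult_left_mono) auto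
  then have 2: "\<bar>k y - k 0 - y * k' 0\<bar> \<le> \<bar>y\<bar> * B" unfolding eq by (simp add: abs_mult)
  show ?thesis using 1 2 by simp
qed




lemma zero_in_holx: "(a, t) \<in> Q \<Longrightarrow> \<rho>0 > 0 \<Longrightarrow> 0 \<in> holx_set \<rho>0 Q w g"
  apply (simp add: holx_set_def) by force

lemma zero_in_holt: "(a, t) \<in> Q \<Longrightarrow> \<rho>0 > 0 \<Longrightarrow> 0 \<in> holt_set \<rho>0 Q w g"
  apply (simp add: holt_set_def) by force

lemma near_bound1:
  fixes k k' :: "real \<Rightarrow> real"
  assumes D: "\<And>w. w \<in> {min 0 y..max 0 y} \<Longrightarrow> (k has_field_derivative k' w) (at w within {min 0 y..max 0 y})"
    and H1: "\<And>w. w \<in> {min 0 y..max 0 y} \<Longrightarrow> \<bar>k' w - k' 0\<bar> \<le> A * \<bar>w\<bar> powr (\<beta> - 1)"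
    and A: "A \<ge> 0" and \<beta>: "\<beta> > 1"
  shows "\<bar>k y - k 0 - y * k' 0\<bar> \<le> A * \<bar>y\<bar> powr \<beta>"
proof -
  obtain \<xi> where \<xi>: "\<xi> \<in> {min 0 y..max 0 y}" and eq: "k y - k 0 - y * k' 0 = y * (k' \<xi> - k' 0)"
    using taylor_mvt[OF D] by blast
  have xy: "\<bar>\<xi>\<bar> \<le> \<bar>y\<bar>" using \<xi> by (auto simp: min_def max_def abs_if split: if_splits)
  have "\<bar>k' \<xi> - k' 0\<bar> \<le> A * \<bar>\<xi>\<bar> powr (\<beta> - 1)" using H1[OF \<xi>] .
  also have "\<dots> \<le> A * \<bar>y\<bar> powr (\<beta> - 1)"
    by (intro mult_left_mono powr_mono2) (use xy A \<beta> in auto)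
  finally have "\<bar>y\<bar> * \<bar>k' \<xi> - k' 0\<bar> \<le> \<bar>y\<bar> * (A * \<bar>y\<bar> powr (\<beta> - 1))"
    by (intro mult_left_mono) auto
  also have "\<dots> = A * \<bar>y\<bar> powr \<beta>" using abs_powr_split[OF \<beta>, of y] by (simp add: algebra_simps)
  finally show ?thesis unfolding eq by (simp add: abs_mult)
qed

lemma core:
  fixes \<nu> :: "real measure" and \<phi> :: "real \<times> real \<Rightarrow> real" and I J :: "real set"
  assumes sets_nu: "sets \<nu> = sets borel"
    and Wint: "integrable \<nu> (\<lambda>y. if \<bar>y\<bar> \<le> 1 then \<bar>y\<bar> powr e else \<bar>y\<bar>)"
    and e_def: "e = (\<alpha> + \<beta>)/2" and g_def: "\<gamma> = (\<beta> - \<alpha>)/2"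
    and \<alpha>1: "1 \<le> \<alpha>" and \<alpha>\<beta>: "\<alpha> < \<beta>" and \<beta>2: "\<beta> < 2" and r0: "\<rho>0 > 0"
    and xz: "xz \<in> J" and JI: "\<forall>x\<in>J. {x-1..x+1} \<subseteq> I"
    and s: "0 \<le> s"
    and Hs: "Hspace \<rho>0 \<beta> (I \<times> {0..s}) \<phi>"
    and L: "0 \<le> L"
    and Lip: "\<forall>x1 t1 x2 t2. t1 \<in> {0..s} \<and> t2 \<in> {0..s} \<longrightarrow>
             \<bar>\<phi> (x1, t1) - \<phi> (x2, t2)\<bar> \<le> L * (\<bar>x1 - x2\<bar> + \<bar>t1 - t2\<bar> powr (1/2))"
  shows "(\<forall>p \<in> J \<times> {0..s}. integrable \<nu> (levy_integrand \<phi> p)) \<and>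
         Hspace \<rho>0 \<gamma> (J \<times> {0..s}) (Iop \<nu> \<phi>) \<and>
         Hnorm \<rho>0 \<gamma> (J \<times> {0..s}) (Iop \<nu> \<phi>)
           \<le> 11 * (1 + 2 / \<rho>0 powr (\<beta> - 1) + 2 / \<rho>0 powr ((\<beta> - 1)/2)) *
              ((\<integral>y. (if \<bar>y\<bar> \<le> 1 then \<bar>y\<bar> powr e else \<bar>y\<bar>) \<partial>\<nu>) + 1) *
              (L + Hnorm \<rho>0 \<beta> (I \<times> {0..s}) \<phi>)"
proof -
  define Q where "Q = I \<times> {0..s}"
  define P where "P = J \<times> {0..s}"
  define W where "W = (\<lambda>y::real. if \<bar>y\<bar> \<le> 1 then \<bar>y\<bar> powr e else \<bar>y\<bar>)"
  define u' where "u' = dx Q \<phi>"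
  define c\<rho> where "c\<rho> = 1 + 2 / \<rho>0 powr (\<beta> - 1) + 2 / \<rho>0 powr ((\<beta> - 1)/2)"
  have \<beta>1: "1 < \<beta>" using \<alpha>1 \<alpha>\<beta> by simp
  have e1: "1 \<le> e" using e_def \<alpha>1 \<beta>1 by simp
  have e\<beta>: "\<beta> = e + \<gamma>" using e_def g_def by simp
  have \<gamma>0: "0 < \<gamma>" using g_def \<alpha>\<beta> by simp
  have \<gamma>1: "\<gamma> \<le> 1/2" using g_def \<alpha>1 \<beta>2 by simp
  have eb: "e \<le> \<beta>" using e\<beta> \<gamma>0 by simp
  have xJI: "x \<in> I" if "x \<in> J" for x
  proof -
    have "x \<in> {x-1..x+1}" by simp
    then show ?thesis using JI that by blast
  qed
  have xzI: "xz \<in> I" using xJI xz by blast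
  have xsl: "\<And>t. t \<in> {0..s} \<Longrightarrow> xslice Q t = I" unfolding xslice_def Q_def by auto
  have HS: "(\<forall>p\<in>Q. (\<lambda>z. \<phi> (z, snd p)) differentiable (at (fst p) within xslice Q (snd p))) \<and>
        bdd_above (sup_set Q \<phi>) \<and> bdd_above (sup_set Q (dx Q \<phi>)) \<and>
        bdd_above (holx_set \<rho>0 Q (dx Q \<phi>) (\<beta> - 1)) \<and>
        bdd_above (holt_set \<rho>0 Q \<phi> (\<beta>/2)) \<and> bdd_above (holt_set \<rho>0 Q (dx Q \<phi>) ((\<beta> - 1)/2))"
    using Hs \<beta>1 \<beta>2 unfolding Hspace_def Q_def by auto
  have D: "((\<lambda>z. \<phi> (z, t)) has_field_derivative u' (z, t)) (at z within I)"
    if t: "t \<in> {0..s}" and z: "z \<in> I" for t z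
  proof -
    have "(z, t) \<in> Q" using t z unfolding Q_def by auto
    then have "(\<lambda>z. \<phi> (z, t)) differentiable (at z within I)" using HS xsl[OF t] by force
    then have "((\<lambda>z. \<phi> (z, t)) has_vector_derivative vector_derivative (\<lambda>z. \<phi> (z, t)) (at z within I)) (at z within I)"
      by (simp add: vector_derivative_works)
    moreover have "u' (z, t) = vector_derivative (\<lambda>z. \<phi> (z, t)) (at z within I)"
      unfolding u'_def dx_def using xsl[OF t] by simp
    ultimately show ?thesis by (simp add: has_real_derivative_iff_has_vector_derivative)
  qed
  define S0 where "S0 = Sup (sup_set Q \<phi>)"
  define S1 where "S1 = Sup (sup_set Q (dx Q \<phi>))"
  define H1 where "H1 = Sup (holx_set \<rho>0 Q (dx Q \<phi>) (\<beta> - 1))"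
  define T0 where "T0 = Sup (holt_set \<rho>0 Q \<phi> (\<beta>/2))"
  define T1 where "T1 = Sup (holt_set \<rho>0 Q (dx Q \<phi>) ((\<beta> - 1)/2))"
  define H where "H = H1 + 2 * S1 / \<rho>0 powr (\<beta> - 1)"
  define T1e where "T1e = T1 + 2 * S1 / \<rho>0 powr ((\<beta> - 1)/2)"
  define N where "N = Hnorm \<rho>0 \<beta> Q \<phi>"
  have xzQ: "(xz, 0) \<in> Q" using xzI s unfolding Q_def by auto
  have S0p: "0 \<le> S0" unfolding S0_def
    by (rule order_trans[OF abs_ge_zero cSup_upper[of "\<bar>\<phi> (xz,0)\<bar>"]]) (use HS xzQ in \<open>auto simp: sup_set_def\<close>)
  have S1p: "0 \<le> S1" unfolding S1_def
    by (rule order_trans[OF abs_ge_zero cSup_upper[of "\<bar>dx Q \<phi> (xz,0)\<bar>"]]) (use HS xzQ in \<open>auto simp: sup_set_def\<close>)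
  have H1p: "0 \<le> H1" unfolding H1_def
    by (rule cSup_upper[OF zero_in_holx[OF xzQ r0]]) (use HS in auto)
  have T0p: "0 \<le> T0" unfolding T0_def
    by (rule cSup_upper[OF zero_in_holt[OF xzQ r0]]) (use HS in auto)
  have T1p: "0 \<le> T1" unfolding T1_def
    by (rule cSup_upper[OF zero_in_holt[OF xzQ r0]]) (use HS in auto)
  have Neq: "N = S0 + S1 + H1 + T0 + T1"
    unfolding N_def Hnorm_def S0_def S1_def H1_def T0_def T1_def using \<beta>1 by auto
  have rp1: "0 < \<rho>0 powr (\<beta> - 1)" and rp2: "0 < \<rho>0 powr ((\<beta> - 1)/2)" using r0 by auto
  have Hp: "0 \<le> H" unfolding H_def using H1p S1p rp1 by simp
  have T1ep: "0 \<le> T1e" unfolding T1e_def using T1p S1p rp2 by simp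
  have cN: "c\<rho> * N = N + 2 * N / \<rho>0 powr (\<beta> - 1) + 2 * N / \<rho>0 powr ((\<beta> - 1)/2)"
    unfolding c\<rho>_def by (simp add: algebra_simps)
  have n1: "2 * S1 / \<rho>0 powr (\<beta> - 1) \<le> 2 * N / \<rho>0 powr (\<beta> - 1)"
    using rp1 Neq S0p H1p T0p T1p by (intro divide_right_mono) auto
  have n2: "2 * S1 / \<rho>0 powr ((\<beta> - 1)/2) \<le> 2 * N / \<rho>0 powr ((\<beta> - 1)/2)"
    using rp2 Neq S0p H1p T0p T1p by (intro divide_right_mono) auto
  have n3: "0 \<le> 2 * N / \<rho>0 powr ((\<beta> - 1)/2)" "0 \<le> 2 * N / \<rho>0 powr (\<beta> - 1)"
    using rp1 rp2 Neq S0p S1p H1p T0p T1p by auto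
  have HN: "H \<le> c\<rho> * N" using cN n1 n3 Neq S0p S1p T0p T1p unfolding H_def by linarith
  have TN: "T1e \<le> c\<rho> * N" using cN n2 n3 Neq S0p S1p H1p T0p unfolding T1e_def by linarith
  have c1: "1 \<le> c\<rho>" using rp1 rp2 unfolding c\<rho>_def by simp
  have Np: "0 \<le> N" using Neq S0p S1p H1p T0p T1p by simp
  have Hx: "\<bar>u' (a, t) - u' (b, t)\<bar> \<le> H * \<bar>a - b\<bar> powr (\<beta> - 1)"
    if "t \<in> {0..s}" "a \<in> I" "b \<in> I" for a b t
    using holx_bound[of \<rho>0 Q "dx Q \<phi>" "\<beta> - 1" a t b] HS r0 \<beta>1 that
    unfolding u'_def H_def H1_def S1_def Q_def by auto
  have Tt: "\<bar>u' (z, t) - u' (z, t')\<bar> \<le> T1e * \<bar>t - t'\<bar> powr ((\<beta> - 1)/2)"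
    if "t \<in> {0..s}" "t' \<in> {0..s}" "z \<in> I" for z t t'
    using holt_bound[of \<rho>0 Q "dx Q \<phi>" "(\<beta> - 1)/2" z t t'] HS r0 \<beta>1 that
    unfolding u'_def T1e_def T1_def S1_def Q_def by auto
  have intI: "x \<in> interior I" if "x \<in> J" for x
  proof -
    have "x \<in> interior {x-1..x+1}" by simp
    moreover have "interior {x-1..x+1} \<subseteq> interior I" using JI that by (intro interior_mono) auto
    ultimately show ?thesis by blast
  qed
  have deriv_eq: "deriv (\<lambda>z. \<phi> (z, t)) x = u' (x, t)" if x: "x \<in> J" and t: "t \<in> {0..s}" for x t
  proof -
    have "((\<lambda>z. \<phi> (z, t)) has_field_derivative u' (x, t)) (at x within I)" using D[OF t xJI[OF x]] .
    then have "((\<lambda>z. \<phi> (z, t)) has_field_derivative u' (x, t)) (at x)"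
      using at_within_interior[OF intI[OF x]] by simp
    then show ?thesis by (rule DERIV_imp_deriv)
  qed
  have lev: "levy_integrand \<phi> (x, t) y = \<phi> (x + y, t) - \<phi> (x, t) - y * u' (x, t) * indicator {y. \<bar>y\<bar> \<le> 1} y"
    if "x \<in> J" "t \<in> {0..s}" for x t y
    unfolding levy_integrand_def using deriv_eq[OF that] by simp
  have seg: "(\<lambda>w. x + w) ` {min 0 y..max 0 y} \<subseteq> I" if "x \<in> J" "\<bar>y\<bar> \<le> 1" for x y
  proof -
    have "(\<lambda>w. x + w) ` {min 0 y..max 0 y} \<subseteq> {x-1..x+1}" using that(2)
      by (auto simp: min_def max_def split: if_splits)
    then show ?thesis using JI that(1) by blast
  qed
  have kD: "((\<lambda>w. \<phi> (x + w, t)) has_field_derivative u' (x + w, t)) (at w within {min 0 y..max 0 y})"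
    if "x \<in> J" "\<bar>y\<bar> \<le> 1" "t \<in> {0..s}" "w \<in> {min 0 y..max 0 y}" for x y t w
    by (rule shift_deriv[where f="\<lambda>z. \<phi> (z, t)" and f'="\<lambda>z. u' (z, t)", OF D[OF that(3)] seg[OF that(1,2)] that(4)])
  have xwI: "x + w \<in> I" if "x \<in> J" "\<bar>y\<bar> \<le> 1" "w \<in> {min 0 y..max 0 y}" for x y w
    using seg[OF that(1,2)] that(3) by blast
  have wy: "\<bar>w\<bar> \<le> \<bar>y\<bar>" if "w \<in> {min 0 y..max 0 y}" for w y :: real
    using that by (auto simp: min_def max_def abs_if split: if_splits)
  have LipX: "\<bar>\<phi> (a, t) - \<phi> (b, t)\<bar> \<le> L * \<bar>a - b\<bar>" if "t \<in> {0..s}" for a b t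
    using spec[OF spec[OF spec[OF spec[OF Lip, of a], of t], of b], of t] that by simp
  have LipT: "\<bar>\<phi> (a, t) - \<phi> (a, t')\<bar> \<le> L * \<bar>t - t'\<bar> powr (1/2)" if "t \<in> {0..s}" "t' \<in> {0..s}" for a t t'
    using spec[OF spec[OF spec[OF spec[OF Lip, of a], of t], of a], of t'] that by simp
  have P0: "\<bar>levy_integrand \<phi> (x, t) y\<bar> \<le> (H + L) * W y" if x: "x \<in> J" and t: "t \<in> {0..s}" for x t y
  proof (cases "\<bar>y\<bar> \<le> 1")
    case True
    have "\<bar>\<phi> (x + y, t) - \<phi> (x + 0, t) - y * u' (x + 0, t)\<bar> \<le> H * \<bar>y\<bar> powr \<beta>"
    proof (rule near_bound1[where k="\<lambda>w. \<phi> (x + w, t)" and k'="\<lambda>w. u' (x + w, t)"])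
      show "((\<lambda>w. \<phi> (x + w, t)) has_field_derivative u' (x + w, t)) (at w within {min 0 y..max 0 y})"
        if "w \<in> {min 0 y..max 0 y}" for w using kD[OF x True t that] .
      show "\<bar>u' (x + w, t) - u' (x + 0, t)\<bar> \<le> H * \<bar>w\<bar> powr (\<beta> - 1)"
        if "w \<in> {min 0 y..max 0 y}" for w using Hx[OF t xwI[OF x True that] xJI[OF x]] by simp
    qed (use Hp \<beta>1 in auto)
    also have "\<dots> \<le> H * \<bar>y\<bar> powr e"
      by (intro mult_left_mono powr_mono') (use True eb Hp in auto)
    also have "\<dots> \<le> (H + L) * W y"
      using True L unfolding W_def by (simp add: mult_right_mono)
    finally show ?thesis using lev[OF x t] True by simp
  next
    case False
    have "\<bar>levy_integrand \<phi> (x, t) y\<bar> = \<bar>\<phi> (x + y, t) - \<phi> (x, t)\<bar>" using lev[OF x t] False by simp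
    also have "\<dots> \<le> L * \<bar>y\<bar>" using LipX[OF t, of "x+y" x] by simp
    also have "\<dots> \<le> (H + L) * W y" using False Hp unfolding W_def by (simp add: mult_right_mono)
    finally show ?thesis .
  qed
  have P1: "\<bar>levy_integrand \<phi> (x, t) y - levy_integrand \<phi> (x', t) y\<bar> \<le> (2*H + 2*L) * \<bar>x - x'\<bar> powr \<gamma> * W y"
    if x: "x \<in> J" and x': "x' \<in> J" and t: "t \<in> {0..s}" and h1: "\<bar>x - x'\<bar> \<le> 1" for x x' t y
  proof (cases "\<bar>y\<bar> \<le> 1")
    case True
    define k where "k = (\<lambda>w. \<phi> (x + w, t) - \<phi> (x' + w, t))"
    define k' where "k' = (\<lambda>w. u' (x + w, t) - u' (x' + w, t))"
    have nb: "\<bar>k y - k 0 - y * k' 0\<bar> \<le> (2*H) * \<bar>y\<bar> powr \<beta> \<and>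
              \<bar>k y - k 0 - y * k' 0\<bar> \<le> \<bar>y\<bar> * (2 * H * \<bar>x - x'\<bar> powr (\<beta> - 1))"
    proof (rule near_bounds)
      show "(k has_field_derivative k' w) (at w within {min 0 y..max 0 y})"
        if "w \<in> {min 0 y..max 0 y}" for w
        unfolding k_def k'_def by (intro DERIV_diff kD[OF x True t that] kD[OF x' True t that])
      show "\<bar>k' w - k' 0\<bar> \<le> 2*H * \<bar>w\<bar> powr (\<beta> - 1)" if w: "w \<in> {min 0 y..max 0 y}" for w
      proof -
        have "\<bar>u' (x + w, t) - u' (x, t)\<bar> \<le> H * \<bar>w\<bar> powr (\<beta> - 1)"
          using Hx[OF t xwI[OF x True w] xJI[OF x]] by simp
        moreover have "\<bar>u' (x' + w, t) - u' (x', t)\<bar> \<le> H * \<bar>w\<bar> powr (\<beta> - 1)"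
          using Hx[OF t xwI[OF x' True w] xJI[OF x']] by simp
        ultimately show ?thesis unfolding k'_def by simp
      qed
      show "\<bar>k' w - k' 0\<bar> \<le> 2 * H * \<bar>x - x'\<bar> powr (\<beta> - 1)" if w: "w \<in> {min 0 y..max 0 y}" for w
      proof -
        have "\<bar>u' (x + w, t) - u' (x' + w, t)\<bar> \<le> H * \<bar>x - x'\<bar> powr (\<beta> - 1)"
          using Hx[OF t xwI[OF x True w] xwI[OF x' True w]] by simp
        moreover have "\<bar>u' (x, t) - u' (x', t)\<bar> \<le> H * \<bar>x - x'\<bar> powr (\<beta> - 1)"
          using Hx[OF t xJI[OF x] xJI[OF x']] by simp
        ultimately show ?thesis unfolding k'_def by simp
      qed
    qed (use Hp \<beta>1 in auto)
    have "\<bar>k y - k 0 - y * k' 0\<bar> \<le> (2*H) * \<bar>y\<bar> powr e * \<bar>x - x'\<bar> powr \<gamma>"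
      by (rule combine_bound[OF conjunct1[OF nb] _ _ _ e1 e\<beta>]) (use nb Hp \<gamma>0 in \<open>auto simp: algebra_simps\<close>)
    also have "\<dots> = (2*H) * (\<bar>y\<bar> powr e * \<bar>x - x'\<bar> powr \<gamma>)" by simp
    also have "\<dots> \<le> (2*H + 2*L) * (\<bar>y\<bar> powr e * \<bar>x - x'\<bar> powr \<gamma>)"
      by (rule mult_right_mono) (use L in auto)
    also have "\<dots> = (2*H + 2*L) * \<bar>x - x'\<bar> powr \<gamma> * W y" using True unfolding W_def by simp
    finally have fin: "\<bar>k y - k 0 - y * k' 0\<bar> \<le> (2*H + 2*L) * \<bar>x - x'\<bar> powr \<gamma> * W y" .
    have eqG: "levy_integrand \<phi> (x, t) y - levy_integrand \<phi> (x', t) y = k y - k 0 - y * k' 0"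
      using lev[OF x t, of y] lev[OF x' t, of y] True unfolding k_def k'_def by (simp add: algebra_simps)
    show ?thesis using fin unfolding eqG .
  next
    case False
    have "\<bar>levy_integrand \<phi> (x, t) y - levy_integrand \<phi> (x', t) y\<bar>
        = \<bar>(\<phi> (x + y, t) - \<phi> (x' + y, t)) - (\<phi> (x, t) - \<phi> (x', t))\<bar>"
      using lev[OF x t] lev[OF x' t] False by simp
    also have "\<dots> \<le> L * \<bar>x - x'\<bar> + L * \<bar>x - x'\<bar>"
      using LipX[OF t, of "x+y" "x'+y"] LipX[OF t, of x x'] by simp
    also have "\<dots> \<le> 2 * L * \<bar>x - x'\<bar> powr \<gamma>"
    proof -
      have "\<bar>x - x'\<bar> powr 1 \<le> \<bar>x - x'\<bar> powr \<gamma>"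
        by (rule powr_mono') (use h1 \<gamma>1 in auto)
      then show ?thesis using L by (simp add: mult_left_mono)
    qed
    also have "\<dots> \<le> (2*H + 2*L) * \<bar>x - x'\<bar> powr \<gamma> * W y"
    proof -
      have "2 * L * \<bar>x - x'\<bar> powr \<gamma> \<le> (2*H + 2*L) * \<bar>x - x'\<bar> powr \<gamma>"
        using Hp by (intro mult_right_mono) auto
      also have "\<dots> \<le> (2*H + 2*L) * \<bar>x - x'\<bar> powr \<gamma> * W y"
        using False Hp L unfolding W_def
        by (intro mult_le_cancel_left1[THEN iffD2] impI) (auto simp: not_less intro!: mult_nonneg_nonneg)
      finally show ?thesis .
    qed
    finally show ?thesis .
  qed
  have P2: "\<bar>levy_integrand \<phi> (x, t) y - levy_integrand \<phi> (x, t') y\<bar> \<le> (2*H + 2*T1e + 2*L) * \<bar>t - t'\<bar> powr (\<gamma>/2) * W y"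
    if x: "x \<in> J" and t: "t \<in> {0..s}" and t': "t' \<in> {0..s}" and h1: "\<bar>t - t'\<bar> \<le> 1" for x t t' y
  proof (cases "\<bar>y\<bar> \<le> 1")
    case True
    define k where "k = (\<lambda>w. \<phi> (x + w, t) - \<phi> (x + w, t'))"
    define k' where "k' = (\<lambda>w. u' (x + w, t) - u' (x + w, t'))"
    define h where "h = \<bar>t - t'\<bar> powr (1/2)"
    have hp: "0 \<le> h" unfolding h_def by simp
    have hb: "\<bar>t - t'\<bar> powr ((\<beta> - 1)/2) = h powr (\<beta> - 1)"
      unfolding h_def by (simp add: powr_powr)
    have hg: "h powr \<gamma> = \<bar>t - t'\<bar> powr (\<gamma>/2)"
      unfolding h_def by (simp add: powr_powr)
    have nb: "\<bar>k y - k 0 - y * k' 0\<bar> \<le> (2*H) * \<bar>y\<bar> powr \<beta> \<and>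
              \<bar>k y - k 0 - y * k' 0\<bar> \<le> \<bar>y\<bar> * (2 * T1e * h powr (\<beta> - 1))"
    proof (rule near_bounds)
      show "(k has_field_derivative k' w) (at w within {min 0 y..max 0 y})"
        if "w \<in> {min 0 y..max 0 y}" for w
        unfolding k_def k'_def by (intro DERIV_diff kD[OF x True t that] kD[OF x True t' that])
      show "\<bar>k' w - k' 0\<bar> \<le> 2*H * \<bar>w\<bar> powr (\<beta> - 1)" if w: "w \<in> {min 0 y..max 0 y}" for w
      proof -
        have "\<bar>u' (x + w, t) - u' (x, t)\<bar> \<le> H * \<bar>w\<bar> powr (\<beta> - 1)"
          using Hx[OF t xwI[OF x True w] xJI[OF x]] by simp
        moreover have "\<bar>u' (x + w, t') - u' (x, t')\<bar> \<le> H * \<bar>w\<bar> powr (\<beta> - 1)"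
          using Hx[OF t' xwI[OF x True w] xJI[OF x]] by simp
        ultimately show ?thesis unfolding k'_def by simp
      qed
      show "\<bar>k' w - k' 0\<bar> \<le> 2 * T1e * h powr (\<beta> - 1)" if w: "w \<in> {min 0 y..max 0 y}" for w
      proof -
        have "\<bar>u' (x + w, t) - u' (x + w, t')\<bar> \<le> T1e * h powr (\<beta> - 1)"
          using Tt[OF t t' xwI[OF x True w]] hb by simp
        moreover have "\<bar>u' (x, t) - u' (x, t')\<bar> \<le> T1e * h powr (\<beta> - 1)"
          using Tt[OF t t' xJI[OF x]] hb by simp
        ultimately show ?thesis unfolding k'_def by simp
      qed
    qed (use Hp \<beta>1 in auto)
    have A1: "\<bar>k y - k 0 - y * k' 0\<bar> \<le> (2*H + 2*T1e) * \<bar>y\<bar> powr \<beta>"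
      using conjunct1[OF nb] T1ep by (smt (verit) mult_right_mono powr_ge_zero)
    have A2: "\<bar>k y - k 0 - y * k' 0\<bar> \<le> (2*H + 2*T1e) * \<bar>y\<bar> * h powr (\<beta> - 1)"
    proof -
      have "\<bar>y\<bar> * (2 * T1e * h powr (\<beta> - 1)) = (2 * T1e) * (\<bar>y\<bar> * h powr (\<beta> - 1))" by simp
      also have "\<dots> \<le> (2*H + 2*T1e) * (\<bar>y\<bar> * h powr (\<beta> - 1))"
        by (rule mult_right_mono) (use Hp in auto)
      finally show ?thesis using conjunct2[OF nb] by (simp add: mult.assoc)
    qed
    have "\<bar>k y - k 0 - y * k' 0\<bar> \<le> (2*H + 2*T1e) * \<bar>y\<bar> powr e * h powr \<gamma>"
      by (rule combine_bound[OF A1 A2 _ hp e1 e\<beta>]) (use Hp T1ep \<gamma>0 in auto)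
    also have "\<dots> = (2*H + 2*T1e) * (\<bar>y\<bar> powr e * h powr \<gamma>)" by simp
    also have "\<dots> \<le> (2*H + 2*T1e + 2*L) * (\<bar>y\<bar> powr e * h powr \<gamma>)"
      by (rule mult_right_mono) (use L in auto)
    also have "\<dots> = (2*H + 2*T1e + 2*L) * \<bar>t - t'\<bar> powr (\<gamma>/2) * W y" using True hg unfolding W_def by simp
    finally have fin: "\<bar>k y - k 0 - y * k' 0\<bar> \<le> (2*H + 2*T1e + 2*L) * \<bar>t - t'\<bar> powr (\<gamma>/2) * W y" .
    have eqG: "levy_integrand \<phi> (x, t) y - levy_integrand \<phi> (x, t') y = k y - k 0 - y * k' 0"
      using lev[OF x t, of y] lev[OF x t', of y] True unfolding k_def k'_def by (simp add: algebra_simps)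
    show ?thesis using fin unfolding eqG .
  next
    case False
    have "\<bar>levy_integrand \<phi> (x, t) y - levy_integrand \<phi> (x, t') y\<bar>
        = \<bar>(\<phi> (x + y, t) - \<phi> (x + y, t')) - (\<phi> (x, t) - \<phi> (x, t'))\<bar>"
      using lev[OF x t] lev[OF x t'] False by simp
    also have "\<dots> \<le> L * \<bar>t - t'\<bar> powr (1/2) + L * \<bar>t - t'\<bar> powr (1/2)"
      using LipT[OF t t', of "x+y"] LipT[OF t t', of x] by simp
    also have "\<dots> \<le> 2 * L * \<bar>t - t'\<bar> powr (\<gamma>/2)"
    proof -
      have "\<bar>t - t'\<bar> powr (1/2) \<le> \<bar>t - t'\<bar> powr (\<gamma>/2)"
        by (rule powr_mono') (use h1 \<gamma>1 in auto)
      then show ?thesis using L by (simp add: mult_left_mono)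
    qed
    also have "\<dots> \<le> (2*H + 2*T1e + 2*L) * \<bar>t - t'\<bar> powr (\<gamma>/2) * W y"
    proof -
      have "2 * L * \<bar>t - t'\<bar> powr (\<gamma>/2) \<le> (2*H + 2*T1e + 2*L) * \<bar>t - t'\<bar> powr (\<gamma>/2)"
        using Hp T1ep by (intro mult_right_mono) auto
      also have "\<dots> \<le> (2*H + 2*T1e + 2*L) * \<bar>t - t'\<bar> powr (\<gamma>/2) * W y"
        using False Hp L T1ep unfolding W_def
        by (intro mult_le_cancel_left1[THEN iffD2] impI) (auto simp: not_less intro!: mult_nonneg_nonneg)
      finally show ?thesis .
    qed
    finally show ?thesis .
  qed
  have contx: "continuous_on UNIV (\<lambda>y. \<phi> (x + y, t))" if t: "t \<in> {0..s}" for x t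
  proof (rule lipschitz_on_continuous_on)
    show "L-lipschitz_on UNIV (\<lambda>y. \<phi> (x + y, t))"
    proof (rule lipschitz_onI)
      fix a b :: real
      show "dist (\<phi> (x + a, t)) (\<phi> (x + b, t)) \<le> L * dist a b"
        using LipX[OF t, of "x+a" "x+b"] by (simp add: dist_real_def)
    qed (use L in auto)
  qed
  have meas: "levy_integrand \<phi> (x, t) \<in> borel_measurable \<nu>" if x: "x \<in> J" and t: "t \<in> {0..s}" for x t
  proof -
    have [measurable]: "(\<lambda>y. \<phi> (x + y, t)) \<in> borel_measurable borel"
      by (rule borel_measurable_continuous_onI[OF contx[OF t]])
    have mb: "(\<lambda>y. \<phi> (x + y, t) - \<phi> (x, t) - y * u' (x, t) * indicator {y. \<bar>y\<bar> \<le> 1} y) \<in> borel_measurable borel"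
      by measurable
    have eq1: "levy_integrand \<phi> (x, t) = (\<lambda>y. \<phi> (x + y, t) - \<phi> (x, t) - y * u' (x, t) * indicator {y. \<bar>y\<bar> \<le> 1} y)"
      using lev[OF x t] by (intro ext) simp
    have eq2: "borel_measurable \<nu> = borel_measurable borel" by (rule measurable_cong_sets[OF sets_nu refl])
    show ?thesis unfolding eq1 eq2 by (rule mb)
  qed
  have Wi: "integrable \<nu> W" using Wint unfolding W_def .
  have Wp: "0 \<le> W y" for y unfolding W_def by simp
  have intg: "integrable \<nu> (levy_integrand \<phi> (x, t))" if x: "x \<in> J" and t: "t \<in> {0..s}" for x t
  proof (rule Bochner_Integration.integrable_bound)
    show "integrable \<nu> (\<lambda>y. (H + L) * W y)" using Wi by simp
    show "levy_integrand \<phi> (x, t) \<in> borel_measurable \<nu>" by (rule meas[OF x t])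
    show "AE y in \<nu>. norm (levy_integrand \<phi> (x, t) y) \<le> norm ((H + L) * W y)"
      using P0[OF x t] Hp L Wp by (intro AE_I2) (simp add: abs_mult)
  qed
  define IW where "IW = (\<integral>y. W y \<partial>\<nu>)"
  have IWp: "0 \<le> IW" unfolding IW_def using Wp by (simp add: integral_nonneg)
  define SI where "SI = (H + L) * IW"
  define K1 where "K1 = (2*H + 2*L) * IW"
  define K2 where "K2 = (2*H + 2*T1e + 2*L) * IW"
  have SIp: "0 \<le> SI" and K1p: "0 \<le> K1" and K2p: "0 \<le> K2" and K12: "K1 \<le> K2"
    unfolding SI_def K1_def K2_def using Hp L T1ep IWp by (auto intro!: mult_right_mono)
  have B0: "\<bar>Iop \<nu> \<phi> (x, t)\<bar> \<le> SI" if x: "x \<in> J" and t: "t \<in> {0..s}" for x t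
    unfolding Iop_def SI_def IW_def by (rule int_bound[OF intg[OF x t] Wi P0[OF x t]])
  have B1: "\<bar>Iop \<nu> \<phi> (x, t) - Iop \<nu> \<phi> (x', t)\<bar> \<le> K1 * \<bar>x - x'\<bar> powr \<gamma>"
    if x: "x \<in> J" and x': "x' \<in> J" and t: "t \<in> {0..s}" and h1: "\<bar>x - x'\<bar> \<le> 1" for x x' t
  proof -
    have "\<bar>Iop \<nu> \<phi> (x, t) - Iop \<nu> \<phi> (x', t)\<bar> \<le> ((2*H + 2*L) * \<bar>x - x'\<bar> powr \<gamma>) * IW"
      unfolding Iop_def IW_def by (rule int_diff_bound[OF intg[OF x t] intg[OF x' t] Wi P1[OF x x' t h1]])
    then show ?thesis unfolding K1_def by (simp add: algebra_simps)
  qed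
  have B2: "\<bar>Iop \<nu> \<phi> (x, t) - Iop \<nu> \<phi> (x, t')\<bar> \<le> K2 * \<bar>t - t'\<bar> powr (\<gamma>/2)"
    if x: "x \<in> J" and t: "t \<in> {0..s}" and t': "t' \<in> {0..s}" and h1: "\<bar>t - t'\<bar> \<le> 1" for x t t'
  proof -
    have "\<bar>Iop \<nu> \<phi> (x, t) - Iop \<nu> \<phi> (x, t')\<bar> \<le> ((2*H + 2*T1e + 2*L) * \<bar>t - t'\<bar> powr (\<gamma>/2)) * IW"
      unfolding Iop_def IW_def by (rule int_diff_bound[OF intg[OF x t] intg[OF x t'] Wi P2[OF x t t' h1]])
    then show ?thesis unfolding K2_def by (simp add: algebra_simps)
  qed
  have cont: "continuous_on P (Iop \<nu> \<phi>)"
  proof (rule cont_hoelder[OF _ K2p \<gamma>0])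
    show "0 < \<gamma>/2" using \<gamma>0 by simp
    fix p q assume p: "p \<in> P" and q: "q \<in> P" and d: "dist p q \<le> 1"
    obtain x t where pe: "p = (x, t)" by fastforce
    obtain x' t' where qe: "q = (x', t')" by fastforce
    have x: "x \<in> J" "t \<in> {0..s}" using p pe unfolding P_def by auto
    have x': "x' \<in> J" "t' \<in> {0..s}" using q qe unfolding P_def by auto
    have d1: "\<bar>x - x'\<bar> \<le> 1" using dist_fst_le[of p q] d pe qe by (simp add: dist_real_def)
    have d2: "\<bar>t - t'\<bar> \<le> 1" using dist_snd_le[of p q] d pe qe by (simp add: dist_real_def)
    have "\<bar>Iop \<nu> \<phi> (x, t) - Iop \<nu> \<phi> (x', t')\<bar> \<le> \<bar>Iop \<nu> \<phi> (x, t) - Iop \<nu> \<phi> (x', t)\<bar> + \<bar>Iop \<nu> \<phi> (x', t) - Iop \<nu> \<phi> (x', t')\<bar>"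
      by simp
    also have "\<dots> \<le> K1 * \<bar>x - x'\<bar> powr \<gamma> + K2 * \<bar>t - t'\<bar> powr (\<gamma>/2)"
      using B1[OF x(1) x'(1) x(2) d1] B2[OF x'(1) x(2) x'(2) d2] by simp
    also have "\<dots> \<le> K2 * \<bar>x - x'\<bar> powr \<gamma> + K2 * \<bar>t - t'\<bar> powr (\<gamma>/2)"
      using K12 by (simp add: mult_right_mono)
    finally show "\<bar>Iop \<nu> \<phi> p - Iop \<nu> \<phi> q\<bar> \<le> K2 * (\<bar>fst p - fst q\<bar> powr \<gamma> + \<bar>snd p - snd q\<bar> powr (\<gamma>/2))"
      using pe qe by (simp add: algebra_simps)
  qed
  have supb: "z \<le> SI" if "z \<in> sup_set P (Iop \<nu> \<phi>)" for z
    using that B0 unfolding sup_set_def P_def by auto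
  have holxb: "z \<le> K1 + 2 * SI" if "z \<in> holx_set \<rho>0 P (Iop \<nu> \<phi>) \<gamma>" for z
  proof -
    from that obtain p q where z: "z = \<bar>Iop \<nu> \<phi> p - Iop \<nu> \<phi> q\<bar> / \<bar>fst p - fst q\<bar> powr \<gamma>"
      and pq: "p \<in> P" "q \<in> P" "snd p = snd q" unfolding holx_set_def by auto
    obtain x t where pe: "p = (x, t)" by fastforce
    obtain x' where qe: "q = (x', t)" using pq(3) pe by (cases q) auto
    have x: "x \<in> J" "t \<in> {0..s}" "x' \<in> J" using pq pe qe unfolding P_def by auto
    have "\<bar>Iop \<nu> \<phi> (x, t) - Iop \<nu> \<phi> (x', t)\<bar> / \<bar>x - x'\<bar> powr \<gamma> \<le> K1 + 2 * SI"
    proof (rule quot_bound)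
      show "\<bar>x - x'\<bar> \<le> 1 \<Longrightarrow> \<bar>Iop \<nu> \<phi> (x, t) - Iop \<nu> \<phi> (x', t)\<bar> \<le> K1 * \<bar>x - x'\<bar> powr \<gamma>"
        using B1[OF x(1) x(3) x(2)] by blast
      show "\<bar>Iop \<nu> \<phi> (x, t) - Iop \<nu> \<phi> (x', t)\<bar> \<le> 2 * SI"
        using B0[OF x(1) x(2)] B0[OF x(3) x(2)] by simp
    qed (use K1p SIp \<gamma>0 in auto)
    then show ?thesis using z pe qe by simp
  qed
  have holtb: "z \<le> K2 + 2 * SI" if "z \<in> holt_set \<rho>0 P (Iop \<nu> \<phi>) (\<gamma>/2)" for z
  proof -
    from that obtain p q where z: "z = \<bar>Iop \<nu> \<phi> p - Iop \<nu> \<phi> q\<bar> / \<bar>snd p - snd q\<bar> powr (\<gamma>/2)"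
      and pq: "p \<in> P" "q \<in> P" "fst p = fst q" unfolding holt_set_def by auto
    obtain x t where pe: "p = (x, t)" by fastforce
    obtain t' where qe: "q = (x, t')" using pq(3) pe by (cases q) auto
    have x: "x \<in> J" "t \<in> {0..s}" "t' \<in> {0..s}" using pq pe qe unfolding P_def by auto
    have "\<bar>Iop \<nu> \<phi> (x, t) - Iop \<nu> \<phi> (x, t')\<bar> / \<bar>t - t'\<bar> powr (\<gamma>/2) \<le> K2 + 2 * SI"
    proof (rule quot_bound)
      show "\<bar>t - t'\<bar> \<le> 1 \<Longrightarrow> \<bar>Iop \<nu> \<phi> (x, t) - Iop \<nu> \<phi> (x, t')\<bar> \<le> K2 * \<bar>t - t'\<bar> powr (\<gamma>/2)"
        using B2[OF x(1) x(2) x(3)] by blast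
      show "\<bar>Iop \<nu> \<phi> (x, t) - Iop \<nu> \<phi> (x, t')\<bar> \<le> 2 * SI"
        using B0[OF x(1) x(2)] B0[OF x(1) x(3)] by simp
    qed (use K2p SIp \<gamma>0 in auto)
    then show ?thesis using z pe qe by simp
  qed
  have xzP: "(xz, 0) \<in> P" using xz s unfolding P_def by auto
  have ne1: "sup_set P (Iop \<nu> \<phi>) \<noteq> {}" using xzP unfolding sup_set_def by auto
  have ne2: "holx_set \<rho>0 P (Iop \<nu> \<phi>) \<gamma> \<noteq> {}" using zero_in_holx[OF xzP r0] by auto
  have ne3: "holt_set \<rho>0 P (Iop \<nu> \<phi>) (\<gamma>/2) \<noteq> {}" using zero_in_holt[OF xzP r0] by auto
  have HsI: "Hspace \<rho>0 \<gamma> P (Iop \<nu> \<phi>)"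
  proof -
    have "bdd_above (sup_set P (Iop \<nu> \<phi>))" using supb by (rule bdd_aboveI)
    moreover have "bdd_above (holx_set \<rho>0 P (Iop \<nu> \<phi>) \<gamma>)" using holxb by (rule bdd_aboveI)
    moreover have "bdd_above (holt_set \<rho>0 P (Iop \<nu> \<phi>) (\<gamma>/2))" using holtb by (rule bdd_aboveI)
    ultimately show ?thesis unfolding Hspace_def using cont \<gamma>0 \<gamma>1 by auto
  qed
  have Sup1: "Sup (sup_set P (Iop \<nu> \<phi>)) \<le> SI" by (rule cSup_least[OF ne1 supb])
  have Sup2: "Sup (holx_set \<rho>0 P (Iop \<nu> \<phi>) \<gamma>) \<le> K1 + 2 * SI" by (rule cSup_least[OF ne2 holxb])
  have Sup3: "Sup (holt_set \<rho>0 P (Iop \<nu> \<phi>) (\<gamma>/2)) \<le> K2 + 2 * SI" by (rule cSup_least[OF ne3 holtb])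
  have HnI: "Hnorm \<rho>0 \<gamma> P (Iop \<nu> \<phi>) \<le> SI + (K1 + 2 * SI) + (K2 + 2 * SI)"
    unfolding Hnorm_def using \<gamma>0 \<gamma>1 Sup1 Sup2 Sup3 by simp
  have "SI + (K1 + 2 * SI) + (K2 + 2 * SI) = IW * (9*H + 9*L + 2*T1e)"
    unfolding SI_def K1_def K2_def by (simp add: algebra_simps)
  also have "\<dots> \<le> IW * (11 * c\<rho> * (L + N))"
  proof (rule mult_left_mono[OF _ IWp])
    have "L \<le> c\<rho> * L" using c1 L by (simp add: mult_le_cancel_right1)
    moreover have "11 * c\<rho> * (L + N) = 11 * (c\<rho> * L) + 11 * (c\<rho> * N)" by (simp add: algebra_simps)
    ultimately show "9*H + 9*L + 2*T1e \<le> 11 * c\<rho> * (L + N)" using HN TN Np mult_nonneg_nonneg[of c\<rho> L] c1 L by linarith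
  qed
  also have "\<dots> \<le> (IW + 1) * (11 * c\<rho> * (L + N))"
    using c1 L Np by (intro mult_right_mono) auto
  finally have fin: "Hnorm \<rho>0 \<gamma> P (Iop \<nu> \<phi>) \<le> 11 * c\<rho> * (IW + 1) * (L + N)"
    using HnI by (simp add: algebra_simps)
  show ?thesis
    using intg HsI fin unfolding P_def Q_def N_def IW_def W_def c\<rho>_def by auto
qed


lemma lip_from_H:
  fixes \<phi> :: "real \<times> real \<Rightarrow> real"
  assumes Hs: "Hspace \<rho>0 \<beta> (UNIV \<times> {0..s}) \<phi>" and \<beta>1: "1 < \<beta>" and \<beta>2: "\<beta> < 2"
    and r0: "\<rho>0 > 0" and s: "0 \<le> s"
  shows "0 \<le> Hnorm \<rho>0 \<beta> (UNIV \<times> {0..s}) \<phi> \<and>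
    (\<forall>x1 t1 x2 t2. t1 \<in> {0..s} \<and> t2 \<in> {0..s} \<longrightarrow>
      \<bar>\<phi> (x1, t1) - \<phi> (x2, t2)\<bar> \<le> ((4 + 2 / \<rho>0 powr (\<beta>/2)) * Hnorm \<rho>0 \<beta> (UNIV \<times> {0..s}) \<phi>) * (\<bar>x1 - x2\<bar> + \<bar>t1 - t2\<bar> powr (1/2)))"
proof -
  define Q where "Q = (UNIV :: real set) \<times> {0..s}"
  define u' where "u' = dx Q \<phi>"
  have xsl: "\<And>t. t \<in> {0..s} \<Longrightarrow> xslice Q t = UNIV" unfolding xslice_def Q_def by auto
  have HS: "(\<forall>p\<in>Q. (\<lambda>z. \<phi> (z, snd p)) differentiable (at (fst p) within xslice Q (snd p))) \<and>
        bdd_above (sup_set Q \<phi>) \<and> bdd_above (sup_set Q (dx Q \<phi>)) \<and>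
        bdd_above (holx_set \<rho>0 Q (dx Q \<phi>) (\<beta> - 1)) \<and>
        bdd_above (holt_set \<rho>0 Q \<phi> (\<beta>/2)) \<and> bdd_above (holt_set \<rho>0 Q (dx Q \<phi>) ((\<beta> - 1)/2))"
    using Hs \<beta>1 \<beta>2 unfolding Hspace_def Q_def by auto
  have D: "((\<lambda>z. \<phi> (z, t)) has_field_derivative u' (z, t)) (at z)"
    if t: "t \<in> {0..s}" for t z
  proof -
    have "(z, t) \<in> Q" using t unfolding Q_def by auto
    then have "(\<lambda>z. \<phi> (z, t)) differentiable (at z)" using HS xsl[OF t] by force
    then have "((\<lambda>z. \<phi> (z, t)) has_vector_derivative vector_derivative (\<lambda>z. \<phi> (z, t)) (at z)) (at z)"
      by (simp add: vector_derivative_works)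
    moreover have "u' (z, t) = vector_derivative (\<lambda>z. \<phi> (z, t)) (at z)"
      unfolding u'_def dx_def using xsl[OF t] by simp
    ultimately show ?thesis by (simp add: has_real_derivative_iff_has_vector_derivative)
  qed
  define S0 where "S0 = Sup (sup_set Q \<phi>)"
  define S1 where "S1 = Sup (sup_set Q (dx Q \<phi>))"
  define H1 where "H1 = Sup (holx_set \<rho>0 Q (dx Q \<phi>) (\<beta> - 1))"
  define T0 where "T0 = Sup (holt_set \<rho>0 Q \<phi> (\<beta>/2))"
  define T1 where "T1 = Sup (holt_set \<rho>0 Q (dx Q \<phi>) ((\<beta> - 1)/2))"
  define N where "N = Hnorm \<rho>0 \<beta> Q \<phi>"
  have x0Q: "(0, 0) \<in> Q" using s unfolding Q_def by auto
  have bS0: "\<bar>\<phi> (z, t)\<bar> \<le> S0" if "t \<in> {0..s}" for z t unfolding S0_def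
    by (rule cSup_upper) (use HS that in \<open>auto simp: sup_set_def Q_def\<close>)
  have bS1: "\<bar>u' (z, t)\<bar> \<le> S1" if "t \<in> {0..s}" for z t unfolding S1_def u'_def
    by (rule cSup_upper) (use HS that in \<open>auto simp: sup_set_def Q_def\<close>)
  have S0p: "0 \<le> S0" using bS0[of 0 0] s by (simp add: order_trans)
  have S1p: "0 \<le> S1" using bS1[of 0 0] s by (simp add: order_trans)
  have H1p: "0 \<le> H1" unfolding H1_def
    by (rule cSup_upper[OF zero_in_holx[OF x0Q r0]]) (use HS in auto)
  have T0p: "0 \<le> T0" unfolding T0_def
    by (rule cSup_upper[OF zero_in_holt[OF x0Q r0]]) (use HS in auto)
  have T1p: "0 \<le> T1" unfolding T1_def
    by (rule cSup_upper[OF zero_in_holt[OF x0Q r0]]) (use HS in auto)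
  have Neq: "N = S0 + S1 + H1 + T0 + T1"
    unfolding N_def Hnorm_def S0_def S1_def H1_def T0_def T1_def using \<beta>1 by auto
  have Np: "0 \<le> N" using Neq S0p S1p H1p T0p T1p by simp
  define T0e where "T0e = T0 + 2 * S0 / \<rho>0 powr (\<beta>/2)"
  have Tt: "\<bar>\<phi> (z, t) - \<phi> (z, t')\<bar> \<le> T0e * \<bar>t - t'\<bar> powr (\<beta>/2)"
    if "t \<in> {0..s}" "t' \<in> {0..s}" for z t t'
    using holt_bound[of \<rho>0 Q "\<phi>" "\<beta>/2" z t t'] HS r0 \<beta>1 that
    unfolding T0e_def T0_def S0_def Q_def by auto
  have rp: "0 < \<rho>0 powr (\<beta>/2)" using r0 by simp
  have T0ep: "0 \<le> T0e" unfolding T0e_def using T0p S0p rp by simp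
  have LX: "\<bar>\<phi> (a, t) - \<phi> (b, t)\<bar> \<le> S1 * \<bar>a - b\<bar>" if t: "t \<in> {0..s}" for a b t
  proof -
    have "\<exists>\<xi>\<in>{min a b..max a b}. \<phi> (max a b, t) - \<phi> (min a b, t) = (*) (u' (\<xi>, t)) (max a b - min a b)"
      by (rule mvt_very_simple[where f="\<lambda>z. \<phi> (z, t)"])
         (use D[OF t] in \<open>auto simp: has_field_derivative_def intro: has_derivative_at_withinI\<close>)
    then obtain \<xi> where E: "\<phi> (max a b, t) - \<phi> (min a b, t) = u' (\<xi>, t) * (max a b - min a b)" by auto
    have "\<bar>\<phi> (a, t) - \<phi> (b, t)\<bar> = \<bar>\<phi> (max a b, t) - \<phi> (min a b, t)\<bar>"
      by (cases "a \<le> b") (auto simp: max_def min_def abs_minus_commute)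
    also have "\<dots> = \<bar>u' (\<xi>, t)\<bar> * \<bar>max a b - min a b\<bar>" unfolding E by (simp add: abs_mult)
    also have "\<bar>max a b - min a b\<bar> = \<bar>a - b\<bar>" by (simp add: max_def min_def)
    finally have "\<bar>\<phi> (a, t) - \<phi> (b, t)\<bar> = \<bar>u' (\<xi>, t)\<bar> * \<bar>a - b\<bar>" .
    also have "\<dots> \<le> S1 * \<bar>a - b\<bar>" using bS1[OF t] by (simp add: mult_right_mono)
    finally show ?thesis .
  qed
  have LT: "\<bar>\<phi> (z, t) - \<phi> (z, t')\<bar> \<le> (T0e + 2 * S0) * \<bar>t - t'\<bar> powr (1/2)"
    if t: "t \<in> {0..s}" and t': "t' \<in> {0..s}" for z t t'
  proof (cases "\<bar>t - t'\<bar> \<le> 1")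
    case True
    have "\<bar>t - t'\<bar> powr (\<beta>/2) \<le> \<bar>t - t'\<bar> powr (1/2)"
      by (rule powr_mono') (use True \<beta>1 in auto)
    then have "\<bar>\<phi> (z, t) - \<phi> (z, t')\<bar> \<le> T0e * \<bar>t - t'\<bar> powr (1/2)"
      using Tt[OF t t', of z] T0ep by (meson mult_left_mono order_trans)
    also have "\<dots> \<le> (T0e + 2 * S0) * \<bar>t - t'\<bar> powr (1/2)" using S0p by (simp add: mult_right_mono)
    finally show ?thesis .
  next
    case False
    then have "1 \<le> \<bar>t - t'\<bar> powr (1/2)" by (simp add: ge_one_powr_ge_zero)
    then have "2 * S0 \<le> 2 * S0 * \<bar>t - t'\<bar> powr (1/2)" using S0p
      by (simp add: mult_le_cancel_left1)
    moreover have "\<bar>\<phi> (z, t) - \<phi> (z, t')\<bar> \<le> 2 * S0" using bS0[OF t, of z] bS0[OF t', of z] by simp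
    moreover have "0 \<le> T0e * \<bar>t - t'\<bar> powr (1/2)" using T0ep by simp
    ultimately show ?thesis by (simp add: algebra_simps)
  qed
  define c where "c = 4 + 2 / \<rho>0 powr (\<beta>/2)"
  have cN: "c * N = 4 * N + 2 * N / \<rho>0 powr (\<beta>/2)" unfolding c_def by (simp add: algebra_simps)
  have n1: "2 * S0 / \<rho>0 powr (\<beta>/2) \<le> 2 * N / \<rho>0 powr (\<beta>/2)"
    using rp Neq S1p H1p T0p T1p by (intro divide_right_mono) auto
  have S1c: "S1 \<le> c * N" using cN n1 Neq S0p S1p H1p T0p T1p rp by (smt (verit) divide_nonneg_pos)
  have T0c: "T0e + 2 * S0 \<le> c * N" using cN n1 Neq S0p S1p H1p T0p T1p unfolding T0e_def by linarith
  have main: "\<bar>\<phi> (x1, t1) - \<phi> (x2, t2)\<bar> \<le> (c * N) * (\<bar>x1 - x2\<bar> + \<bar>t1 - t2\<bar> powr (1/2))"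
    if t1: "t1 \<in> {0..s}" and t2: "t2 \<in> {0..s}" for x1 t1 x2 t2
  proof -
    have "\<bar>\<phi> (x1, t1) - \<phi> (x2, t2)\<bar> \<le> \<bar>\<phi> (x1, t1) - \<phi> (x2, t1)\<bar> + \<bar>\<phi> (x2, t1) - \<phi> (x2, t2)\<bar>" by simp
    also have "\<dots> \<le> S1 * \<bar>x1 - x2\<bar> + (T0e + 2 * S0) * \<bar>t1 - t2\<bar> powr (1/2)"
      using LX[OF t1, of x1 x2] LT[OF t1 t2, of x2] by simp
    also have "\<dots> \<le> (c * N) * \<bar>x1 - x2\<bar> + (c * N) * \<bar>t1 - t2\<bar> powr (1/2)"
      using S1c T0c by (intro add_mono mult_right_mono) auto
    finally show ?thesis by (simp add: algebra_simps)
  qed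
  show ?thesis using main Np unfolding c_def N_def Q_def by blast
qed

theorem lemma3p2:
  fixes \<nu> :: "real measure" and \<rho> :: "real \<Rightarrow> real" and M \<alpha> \<rho>0 :: real
  assumes "\<rho> \<in> borel_measurable borel"
    and "\<forall>y. 0 \<le> \<rho> y"
    and "\<nu> = density lborel (\<lambda>y. ennreal (\<rho> y))"
    and "levy_measure \<nu>"
    and "(\<integral>\<^sup>+ y. ennreal (\<bar>y\<bar> * indicator {y. \<bar>y\<bar> > 1} y) \<partial>\<nu>) < \<infinity>"
    and "M > 0" and "1 \<le> \<alpha>" and "\<alpha> < 2"
    and "\<forall>y. y \<noteq> 0 \<and> \<bar>y\<bar> \<le> 1 \<longrightarrow> \<rho> y \<le> M / \<bar>y\<bar> powr (1 + \<alpha>)"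
    and "\<rho>0 > 0"
  shows
   "(\<forall>l r \<beta>. l < r \<and> \<alpha> < \<beta> \<and> \<beta> < 2 \<longrightarrow>
      (\<exists>C>0. \<forall>s>0. \<forall>\<phi> L.
         L > 0 \<and>
         (\<forall>x1 t1 x2 t2. t1 \<in> {0..s} \<and> t2 \<in> {0..s} \<longrightarrow>
             \<bar>\<phi> (x1, t1) - \<phi> (x2, t2)\<bar> \<le> L * (\<bar>x1 - x2\<bar> + \<bar>t1 - t2\<bar> powr (1/2))) \<and>
         Hspace \<rho>0 \<beta> ({l - 1..r + 1} \<times> {0..s}) \<phi>
         \<longrightarrow>
         (\<forall>p \<in> {l..r} \<times> {0..s}. integrable \<nu> (levy_integrand \<phi> p)) \<and>
         Hspace \<rho>0 ((\<beta> - \<alpha>)/2) ({l..r} \<times> {0..s}) (Iop \<nu> \<phi>) \<and>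
         Hnorm \<rho>0 ((\<beta> - \<alpha>)/2) ({l..r} \<times> {0..s}) (Iop \<nu> \<phi>)
           \<le> C * (L + Hnorm \<rho>0 \<beta> ({l - 1..r + 1} \<times> {0..s}) \<phi>)))
    \<and>
    (\<forall>\<beta>. \<alpha> < \<beta> \<and> \<beta> < 2 \<longrightarrow>
      (\<exists>C>0. \<forall>s>0. \<forall>\<phi>.
         Hspace \<rho>0 \<beta> (UNIV \<times> {0..s}) \<phi>
         \<longrightarrow>
         (\<forall>p \<in> UNIV \<times> {0..s}. integrable \<nu> (levy_integrand \<phi> p)) \<and>
         Hspace \<rho>0 ((\<beta> - \<alpha>)/2) (UNIV \<times> {0..s}) (Iop \<nu> \<phi>) \<and>
         Hnorm \<rho>0 ((\<beta> - \<alpha>)/2) (UNIV \<times> {0..s}) (Iop \<nu> \<phi>)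
           \<le> C * Hnorm \<rho>0 \<beta> (UNIV \<times> {0..s}) \<phi>))"
  proof -
  note rho_meas = assms(1) and nn = assms(2) and nu = assms(3) and lev = assms(4) and far = assms(5)
    and M = assms(6) and \<alpha>1 = assms(7) and \<alpha>2 = assms(8) and bnd = assms(9) and r0 = assms(10)
  have sets_nu: "sets \<nu> = sets borel" using lev unfolding levy_measure_def by simp
  have Wint: "integrable \<nu> (\<lambda>y. if \<bar>y\<bar> \<le> 1 then \<bar>y\<bar> powr ((\<alpha> + \<beta>)/2) else \<bar>y\<bar>)"
    if "\<alpha> < \<beta>" for \<beta>
    by (rule W_integrable[OF rho_meas nn nu far M bnd]) (use that in auto)
  have IWp: "0 \<le> (\<integral>y. (if \<bar>y\<bar> \<le> 1 then \<bar>y\<bar> powr e else \<bar>y\<bar>) \<partial>\<nu>)" for e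
    by (rule Bochner_Integration.integral_nonneg) auto
  have cpos: "0 < 11 * (1 + 2 / \<rho>0 powr (\<beta> - 1) + 2 / \<rho>0 powr ((\<beta> - 1)/2)) *
              ((\<integral>y. (if \<bar>y\<bar> \<le> 1 then \<bar>y\<bar> powr e else \<bar>y\<bar>) \<partial>\<nu>) + 1)" for \<beta> e
  proof -
    have "0 < 1 + 2 / \<rho>0 powr (\<beta> - 1) + 2 / \<rho>0 powr ((\<beta> - 1)/2)" using r0
      by (smt (verit) divide_nonneg_pos powr_gt_zero)
    moreover have "0 < (\<integral>y. (if \<bar>y\<bar> \<le> 1 then \<bar>y\<bar> powr e else \<bar>y\<bar>) \<partial>\<nu>) + 1" using IWp[of e] by linarith
    ultimately show ?thesis by simp
  qed
  have part1: "\<forall>l r \<beta>. l < r \<and> \<alpha> < \<beta> \<and> \<beta> < 2 \<longrightarrow>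
      (\<exists>C>0. \<forall>s>0. \<forall>\<phi> L.
         L > 0 \<and>
         (\<forall>x1 t1 x2 t2. t1 \<in> {0..s} \<and> t2 \<in> {0..s} \<longrightarrow>
             \<bar>\<phi> (x1, t1) - \<phi> (x2, t2)\<bar> \<le> L * (\<bar>x1 - x2\<bar> + \<bar>t1 - t2\<bar> powr (1/2))) \<and>
         Hspace \<rho>0 \<beta> ({l - 1..r + 1} \<times> {0..s}) \<phi>
         \<longrightarrow>
         (\<forall>p \<in> {l..r} \<times> {0..s}. integrable \<nu> (levy_integrand \<phi> p)) \<and>
         Hspace \<rho>0 ((\<beta> - \<alpha>)/2) ({l..r} \<times> {0..s}) (Iop \<nu> \<phi>) \<and>
         Hnorm \<rho>0 ((\<beta> - \<alpha>)/2) ({l..r} \<times> {0..s}) (Iop \<nu> \<phi>)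
           \<le> C * (L + Hnorm \<rho>0 \<beta> ({l - 1..r + 1} \<times> {0..s}) \<phi>))"
  proof (intro allI impI)
    fix l r \<beta> :: real assume lrb: "l < r \<and> \<alpha> < \<beta> \<and> \<beta> < 2"
    define e where "e = (\<alpha> + \<beta>)/2"
    define C where "C = 11 * (1 + 2 / \<rho>0 powr (\<beta> - 1) + 2 / \<rho>0 powr ((\<beta> - 1)/2)) *
              ((\<integral>y. (if \<bar>y\<bar> \<le> 1 then \<bar>y\<bar> powr e else \<bar>y\<bar>) \<partial>\<nu>) + 1)"
    show "\<exists>C>0. \<forall>s>0. \<forall>\<phi> L.
         L > 0 \<and>
         (\<forall>x1 t1 x2 t2. t1 \<in> {0..s} \<and> t2 \<in> {0..s} \<longrightarrow>
             \<bar>\<phi> (x1, t1) - \<phi> (x2, t2)\<bar> \<le> L * (\<bar>x1 - x2\<bar> + \<bar>t1 - t2\<bar> powr (1/2))) \<and>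
         Hspace \<rho>0 \<beta> ({l - 1..r + 1} \<times> {0..s}) \<phi>
         \<longrightarrow>
         (\<forall>p \<in> {l..r} \<times> {0..s}. integrable \<nu> (levy_integrand \<phi> p)) \<and>
         Hspace \<rho>0 ((\<beta> - \<alpha>)/2) ({l..r} \<times> {0..s}) (Iop \<nu> \<phi>) \<and>
         Hnorm \<rho>0 ((\<beta> - \<alpha>)/2) ({l..r} \<times> {0..s}) (Iop \<nu> \<phi>)
           \<le> C * (L + Hnorm \<rho>0 \<beta> ({l - 1..r + 1} \<times> {0..s}) \<phi>)"
    proof (intro exI[of _ C] conjI allI impI)
      show "0 < C" unfolding C_def by (rule cpos)
      fix s \<phi> L assume s: "(s::real) > 0" and hyp: "L > 0 \<and>
         (\<forall>x1 t1 x2 t2. t1 \<in> {0..s} \<and> t2 \<in> {0..s} \<longrightarrow>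
             \<bar>\<phi> (x1, t1) - \<phi> (x2, t2)\<bar> \<le> L * (\<bar>x1 - x2\<bar> + \<bar>t1 - t2\<bar> powr (1/2))) \<and>
         Hspace \<rho>0 \<beta> ({l - 1..r + 1} \<times> {0..s}) \<phi>"
      have We: "integrable \<nu> (\<lambda>y. if \<bar>y\<bar> \<le> 1 then \<bar>y\<bar> powr e else \<bar>y\<bar>)"
        using Wint[of \<beta>] lrb unfolding e_def by simp
      have JI: "\<forall>x\<in>{l..r}. {x-1..x+1} \<subseteq> {l-1..r+1}" by auto
      have "(\<forall>p \<in> {l..r} \<times> {0..s}. integrable \<nu> (levy_integrand \<phi> p)) \<and>
         Hspace \<rho>0 ((\<beta> - \<alpha>)/2) ({l..r} \<times> {0..s}) (Iop \<nu> \<phi>) \<and>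
         Hnorm \<rho>0 ((\<beta> - \<alpha>)/2) ({l..r} \<times> {0..s}) (Iop \<nu> \<phi>)
           \<le> 11 * (1 + 2 / \<rho>0 powr (\<beta> - 1) + 2 / \<rho>0 powr ((\<beta> - 1)/2)) *
              ((\<integral>y. (if \<bar>y\<bar> \<le> 1 then \<bar>y\<bar> powr e else \<bar>y\<bar>) \<partial>\<nu>) + 1) *
              (L + Hnorm \<rho>0 \<beta> ({l-1..r+1} \<times> {0..s}) \<phi>)"
        by (rule core[where I="{l-1..r+1}" and J="{l..r}" and xz=l])
           (use sets_nu We lrb \<alpha>1 r0 JI s hyp in \<open>auto simp: e_def\<close>)
      then show "(\<forall>p \<in> {l..r} \<times> {0..s}. integrable \<nu> (levy_integrand \<phi> p))"
        "Hspace \<rho>0 ((\<beta> - \<alpha>)/2) ({l..r} \<times> {0..s}) (Iop \<nu> \<phi>)"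
        "Hnorm \<rho>0 ((\<beta> - \<alpha>)/2) ({l..r} \<times> {0..s}) (Iop \<nu> \<phi>)
           \<le> C * (L + Hnorm \<rho>0 \<beta> ({l - 1..r + 1} \<times> {0..s}) \<phi>)"
        unfolding C_def by auto
    qed
  qed
  have part2: "\<forall>\<beta>. \<alpha> < \<beta> \<and> \<beta> < 2 \<longrightarrow>
      (\<exists>C>0. \<forall>s>0. \<forall>\<phi>.
         Hspace \<rho>0 \<beta> (UNIV \<times> {0..s}) \<phi>
         \<longrightarrow>
         (\<forall>p \<in> UNIV \<times> {0..s}. integrable \<nu> (levy_integrand \<phi> p)) \<and>
         Hspace \<rho>0 ((\<beta> - \<alpha>)/2) (UNIV \<times> {0..s}) (Iop \<nu> \<phi>) \<and>
         Hnorm \<rho>0 ((\<beta> - \<alpha>)/2) (UNIV \<times> {0..s}) (Iop \<nu> \<phi>)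
           \<le> C * Hnorm \<rho>0 \<beta> (UNIV \<times> {0..s}) \<phi>)"
  proof (intro allI impI)
    fix \<beta> :: real assume b: "\<alpha> < \<beta> \<and> \<beta> < 2"
    define e where "e = (\<alpha> + \<beta>)/2"
    define C where "C = 11 * (1 + 2 / \<rho>0 powr (\<beta> - 1) + 2 / \<rho>0 powr ((\<beta> - 1)/2)) *
              ((\<integral>y. (if \<bar>y\<bar> \<le> 1 then \<bar>y\<bar> powr e else \<bar>y\<bar>) \<partial>\<nu>) + 1)"
    define c where "c = 4 + 2 / \<rho>0 powr (\<beta>/2)"
    have Cp: "0 < C" unfolding C_def by (rule cpos)
    have cp: "0 < c" unfolding c_def using r0 by (smt (verit) divide_nonneg_pos powr_gt_zero)
    show "\<exists>C>0. \<forall>s>0. \<forall>\<phi>.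
         Hspace \<rho>0 \<beta> (UNIV \<times> {0..s}) \<phi>
         \<longrightarrow>
         (\<forall>p \<in> UNIV \<times> {0..s}. integrable \<nu> (levy_integrand \<phi> p)) \<and>
         Hspace \<rho>0 ((\<beta> - \<alpha>)/2) (UNIV \<times> {0..s}) (Iop \<nu> \<phi>) \<and>
         Hnorm \<rho>0 ((\<beta> - \<alpha>)/2) (UNIV \<times> {0..s}) (Iop \<nu> \<phi>)
           \<le> C * Hnorm \<rho>0 \<beta> (UNIV \<times> {0..s}) \<phi>"
    proof (intro exI[of _ "C * (c + 1)"] conjI allI impI)
      show "0 < C * (c + 1)" using Cp cp by simp
      fix s \<phi> assume s: "(s::real) > 0" and Hs: "Hspace \<rho>0 \<beta> (UNIV \<times> {0..s}) \<phi>"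
      define N where "N = Hnorm \<rho>0 \<beta> (UNIV \<times> {0..s}) \<phi>"
      have We: "integrable \<nu> (\<lambda>y. if \<bar>y\<bar> \<le> 1 then \<bar>y\<bar> powr e else \<bar>y\<bar>)"
        using Wint[of \<beta>] b unfolding e_def by simp
      have LH: "0 \<le> N \<and> (\<forall>x1 t1 x2 t2. t1 \<in> {0..s} \<and> t2 \<in> {0..s} \<longrightarrow>
          \<bar>\<phi> (x1, t1) - \<phi> (x2, t2)\<bar> \<le> (c * N) * (\<bar>x1 - x2\<bar> + \<bar>t1 - t2\<bar> powr (1/2)))"
        unfolding c_def N_def by (rule lip_from_H[OF Hs]) (use b \<alpha>1 r0 s in auto)
      have "(\<forall>p \<in> UNIV \<times> {0..s}. integrable \<nu> (levy_integrand \<phi> p)) \<and>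
         Hspace \<rho>0 ((\<beta> - \<alpha>)/2) (UNIV \<times> {0..s}) (Iop \<nu> \<phi>) \<and>
         Hnorm \<rho>0 ((\<beta> - \<alpha>)/2) (UNIV \<times> {0..s}) (Iop \<nu> \<phi>)
           \<le> 11 * (1 + 2 / \<rho>0 powr (\<beta> - 1) + 2 / \<rho>0 powr ((\<beta> - 1)/2)) *
              ((\<integral>y. (if \<bar>y\<bar> \<le> 1 then \<bar>y\<bar> powr e else \<bar>y\<bar>) \<partial>\<nu>) + 1) *
              (c * N + Hnorm \<rho>0 \<beta> (UNIV \<times> {0..s}) \<phi>)"
        by (rule core[where I="UNIV" and J="UNIV" and xz=0])
           (use sets_nu We b \<alpha>1 r0 s Hs LH cp in \<open>auto simp: e_def\<close>)
      moreover have "C * (c * N + N) = C * (c + 1) * N" by (simp add: algebra_simps)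
      ultimately show "(\<forall>p \<in> UNIV \<times> {0..s}. integrable \<nu> (levy_integrand \<phi> p))"
        "Hspace \<rho>0 ((\<beta> - \<alpha>)/2) (UNIV \<times> {0..s}) (Iop \<nu> \<phi>)"
        "Hnorm \<rho>0 ((\<beta> - \<alpha>)/2) (UNIV \<times> {0..s}) (Iop \<nu> \<phi>)
           \<le> C * (c + 1) * Hnorm \<rho>0 \<beta> (UNIV \<times> {0..s}) \<phi>"
        unfolding C_def[symmetric] N_def[symmetric] by auto
    qed
  qed
  show ?thesis using part1 part2 by blast
qed


end
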